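(* Let $P$ be a compact PL space and $(W,f)\in\widetilde\Psi_d(\mathbb{R}^N)(P)$ with $Z(W)=\varnothing$. Then there is a concordance $(\widehat W,\widehat f)$ from $(W,f)$ to the trivial element $(\varnothing,\infty)$. Moreover, $\widehat W$ can be chosen so that, for every $x\in P$ with $W_x=\varnothing$, $\widehat W$ is empty over $[0,1]\times\{x\}$.
   Context: PL spaces and maps are as usual. A PL map $\pi:E\to B$ is a PL submersion of codimension $d$ if every $e\in E$ has an open neighbourhood $V$ of $\pi(e)$ and an open PL embedding $h:V\times\mathbb{R}^d\to\pi^{-1}(V)$ with $h(\pi(e),\mathbf{0})=e$ and $\pi h$ the projection. $\Psi_d(\mathbb{R}^N)(P)$ is the set of closed PL subspaces $W\subseteq P\times\mathbb{R}^N$ whose projection to $P$ is a PL submersion of codimension $d$; $W_x$ is the fibre over $x$, and pullback is $g^*W=\{(q,y):(g(q),y)\in W\}$. The zero-set $Z(W)$ is $\{x:\mathbf{0}\in W_x\}$. A marking function for $W$ is a continuous $f:P\to\mathbb{R}^N\cup\{\infty\}$ with: $f(x)=\infty$ iff $W_x=\varnothing$; $f(x)\in W_x$ if $W_x\neq\varnothing$; $f(x)=\mathbf{0}$ if $\mathbf{0}\in W_x$; and $f$ PL on $f^{-1}(\mathbb{R}^N)$. $\widetilde\Psi_d(\mathbb{R}^N)(P)$ is the set of pairs $(W,f)$, with pullback $(g^*W,f\circ g)$. The trivial element $(\varnothing,\infty)$ has empty $W$ and constant marking function $\infty$. A concordance from $a_0$ to $a_1$ is an element of $\widetilde\Psi_d(\mathbb{R}^N)([0,1]\times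 P)$ whose pullback along $x\mapsto(j,x)$ equals $a_j$ for $j=0,1$. *)

theory Defs
  imports "HOL-Analysis.Analysis"
begin

text \<open>PL spaces are modelled as (locally finite) polyhedra in a Euclidean space:
  a set is a polyhedron if near each of its points it agrees with a finite
  union of polytopes (convex hulls of finite sets).\<close>

definition locally_polyhedral :: "'a::euclidean_space set \<Rightarrow> bool" where
  "locally_polyhedral S \<longleftrightarrow>
     (\<forall>a\<in>S. \<exists>U F. open U \<and> a \<in> U \<and> finite F \<and> (\<forall>T\<in>F. polytope T) \<and>
                  U \<inter> S = U \<inter> \<Union>F)"

definition pl_map :: "'a::euclidean_space set \<Rightarrow> ('a \<Rightarrow> 'b::euclidean_space) \<Rightarrow> bool" where
  "pl_map S f \<longleftrightarrow> locally_polyhedral S \<and> continuous_on S f \<and>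
                    locally_polyhedral ((\<lambda>x. (x, f x)) ` S)"

text \<open>PL submersion of codimension d, pi : E \<rightarrow> B.  The model space R^d is
  represented by a d-dimensional linear subspace L of the Euclidean type 'c.\<close>

definition pl_submersion ::
  "nat \<Rightarrow> 'c::euclidean_space itself \<Rightarrow> ('e::euclidean_space \<Rightarrow> 'b::euclidean_space)
     \<Rightarrow> 'e set \<Rightarrow> 'b set \<Rightarrow> bool" where
  "pl_submersion d (_::'c itself) \<pi> E B \<longleftrightarrow>
     pl_map E \<pi> \<and> locally_polyhedral B \<and> \<pi> ` E \<subseteq> B \<and>
     (\<forall>e\<in>E. \<exists>V (L::'c set) (h::'b \<times> 'c \<Rightarrow> 'e) g.
        openin (top_of_set B) V \<and> \<pi> e \<in> V \<and>
        subspace L \<and> dim L = d \<and>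
        pl_map (V \<times> L) h \<and>
        h ` (V \<times> L) \<subseteq> E \<inter> \<pi> -` V \<and>
        openin (top_of_set (E \<inter> \<pi> -` V)) (h ` (V \<times> L)) \<and>
        homeomorphism (V \<times> L) (h ` (V \<times> L)) h g \<and>
        h (\<pi> e, 0) = e \<and>
        (\<forall>z\<in>V \<times> L. \<pi> (h z) = fst z))"

definition fibre :: "('p \<times> 'v) set \<Rightarrow> 'p \<Rightarrow> 'v set" where
  "fibre W x = {y. (x, y) \<in> W}"

definition Psi :: "nat \<Rightarrow> 'p::euclidean_space set \<Rightarrow> ('p \<times> 'v::euclidean_space) set \<Rightarrow> bool" where
  "Psi d P W \<longleftrightarrow>
     W \<subseteq> P \<times> UNIV \<and> closedin (top_of_set (P \<times> (UNIV::'v set))) W \<and>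
     locally_polyhedral W \<and> pl_submersion d TYPE('v) fst W P"

definition zero_set :: "'p set \<Rightarrow> ('p \<times> 'v::zero) set \<Rightarrow> 'p set" where
  "zero_set P W = {x\<in>P. 0 \<in> fibre W x}"

text \<open>R^N \<union> {\<infinity>} is modelled as 'v option (None = \<infinity>), with the topology of the
  one-point compactification.\<close>

definition ocopen :: "'v::euclidean_space option set \<Rightarrow> bool" where
  "ocopen U \<longleftrightarrow> open (Some -` U) \<and> (None \<in> U \<longrightarrow> compact (UNIV - Some -` U))"

definition oc_continuous_on :: "'p::topological_space set \<Rightarrow> ('p \<Rightarrow> 'v::euclidean_space option) \<Rightarrow> bool" where
  "oc_continuous_on P f \<longleftrightarrow>
     (\<forall>x\<in>P. \<forall>U. ocopen U \<and> f x \<in> U \<longrightarrow>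
        (\<exists>V. openin (top_of_set P) V \<and> x \<in> V \<and> f ` V \<subseteq> U))"

definition marking :: "'p::euclidean_space set \<Rightarrow> ('p \<times> 'v::euclidean_space) set \<Rightarrow> ('p \<Rightarrow> 'v option) \<Rightarrow> bool" where
  "marking P W f \<longleftrightarrow>
     oc_continuous_on P f \<and>
     (\<forall>x\<in>P. f x = None \<longleftrightarrow> fibre W x = {}) \<and>
     (\<forall>x\<in>P. fibre W x \<noteq> {} \<longrightarrow> (\<exists>v. f x = Some v \<and> v \<in> fibre W x)) \<and>
     (\<forall>x\<in>P. 0 \<in> fibre W x \<longrightarrow> f x = Some 0) \<and>
     pl_map {x\<in>P. f x \<noteq> None} (\<lambda>x. the (f x))"

definition PsiT :: "nat \<Rightarrow> 'p::euclidean_space set \<Rightarrow> ('p \<times> 'v::euclidean_space) set \<Rightarrow> ('p \<Rightarrow> 'v option) \<Rightarrow> bool" where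
  "PsiT d P W f \<longleftrightarrow> Psi d P W \<and> marking P W f"

definition slice :: "((real \<times> 'p) \<times> 'v) set \<Rightarrow> real \<Rightarrow> ('p \<times> 'v) set" where
  "slice Wh t = {(x, y). ((t, x), y) \<in> Wh}"

definition concordance ::
  "nat \<Rightarrow> 'p::euclidean_space set \<Rightarrow> ((real \<times> 'p) \<times> 'v::euclidean_space) set \<Rightarrow> (real \<times> 'p \<Rightarrow> 'v option)
     \<Rightarrow> ('p \<times> 'v) set \<Rightarrow> ('p \<Rightarrow> 'v option) \<Rightarrow> ('p \<times> 'v) set \<Rightarrow> ('p \<Rightarrow> 'v option) \<Rightarrow> bool" where
  "concordance d P Wh fh W0 f0 W1 f1 \<longleftrightarrow>
     PsiT d ({0..1} \<times> P) Wh fh \<and>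
     slice Wh 0 = W0 \<and> (\<forall>x\<in>P. fh (0, x) = f0 x) \<and>
     slice Wh 1 = W1 \<and> (\<forall>x\<in>P. fh (1, x) = f1 x)"

end

theory Submission
  imports Defs "HOL-Homology.Invariance_of_Domain"
begin


lemma lp_local:
  assumes "\<And>a. a \<in> S \<Longrightarrow> \<exists>U T. open U \<and> a \<in> U \<and> locally_polyhedral T \<and> U \<inter> S = U \<inter> T"
  shows "locally_polyhedral S"
  unfolding locally_polyhedral_def
proof
  fix a assume a: "a \<in> S"
  obtain U T where U: "open U" "a \<in> U" "locally_polyhedral T" "U \<inter> S = U \<inter> T"
    using assms[OF a] by auto
  have "a \<in> T" using U(2,4) a by auto
  obtain U' F where F: "open U'" "a \<in> U'" "finite F" "\<forall>T\<in>F. polytope T" "U' \<inter> T = U' \<inter> \<Union>F"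
    using U(3) \<open>a \<in> T\<close> unfolding locally_polyhedral_def by auto
  have "(U \<inter> U') \<inter> S = (U \<inter> U') \<inter> \<Union>F" using U(4) F(5) by auto
  moreover have "open (U \<inter> U')" using U(1) F(1) by auto
  ultimately show "\<exists>U F. open U \<and> a \<in> U \<and> finite F \<and> (\<forall>T\<in>F. polytope T) \<and> U \<inter> S = U \<inter> \<Union>F"
    using U(2) F(2-4) by auto
qed

lemma polytope_nbhd:
  fixes a :: "'a::euclidean_space"
  assumes "open U" "a \<in> U"
  obtains C Q where "polytope C" "open Q" "a \<in> Q" "Q \<subseteq> C" "C \<subseteq> U"
proof -
  obtain u v where "cbox u v \<subseteq> U" "a \<in> box u v"
    using open_contains_cbox[OF assms] by metis
  then show ?thesis using that[of "cbox u v" "box u v"]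
    by (simp add: polytope_interval box_subset_cbox open_box)
qed

lemma lp_polyhedra_Union:
  fixes F :: "'a::euclidean_space set set"
  assumes "finite F" "\<And>T. T \<in> F \<Longrightarrow> polyhedron T"
  shows "locally_polyhedral (\<Union>F)"
  unfolding locally_polyhedral_def
proof
  fix a :: 'a assume "a \<in> \<Union>F"
  obtain C Q where C: "polytope C" "open Q" "a \<in> Q" "Q \<subseteq> C"
    using polytope_nbhd[of UNIV a] by auto
  show "\<exists>U G. open U \<and> a \<in> U \<and> finite G \<and> (\<forall>T\<in>G. polytope T) \<and> U \<inter> \<Union>F = U \<inter> \<Union>G"
    apply (rule exI[of _ Q], rule exI[of _ "(\<lambda>T. T \<inter> C) ` F"])
    using C assms by (auto intro: polyhedron_Int_polytope)
qed

lemma lp_polyhedron: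
  fixes S :: "'a::euclidean_space set"
  assumes "polyhedron S" shows "locally_polyhedral S"
  using lp_polyhedra_Union[of "{S}"] assms by auto

lemma lp_UNIV: "locally_polyhedral (UNIV::'a::euclidean_space set)"
  by (rule lp_polyhedron) simp

lemma lp_empty: "locally_polyhedral ({}::'a::euclidean_space set)"
  by (simp add: locally_polyhedral_def)

lemma lp_open:
  fixes S :: "'a::euclidean_space set"
  assumes "open S" shows "locally_polyhedral S"
  unfolding locally_polyhedral_def
proof
  fix a assume "a \<in> S"
  then obtain C Q where C: "polytope C" "open Q" "a \<in> Q" "Q \<subseteq> C" "C \<subseteq> S"
    using polytope_nbhd[OF assms] by metis
  show "\<exists>U F. open U \<and> a \<in> U \<and> finite F \<and> (\<forall>T\<in>F. polytope T) \<and> U \<inter> S = U \<inter> \<Union>F"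
    apply (rule exI[of _ Q], rule exI[of _ "{C}"])
    using C by auto
qed

lemma lp_Int:
  fixes S :: "'a::euclidean_space set"
  assumes "locally_polyhedral S" "locally_polyhedral T"
  shows "locally_polyhedral (S \<inter> T)"
  unfolding locally_polyhedral_def
proof
  fix a assume a: "a \<in> S \<inter> T"
  obtain U1 F1 where 1: "open U1" "a \<in> U1" "finite F1" "\<forall>T\<in>F1. polytope T" "U1 \<inter> S = U1 \<inter> \<Union>F1"
    using assms(1) a unfolding locally_polyhedral_def by auto
  obtain U2 F2 where 2: "open U2" "a \<in> U2" "finite F2" "\<forall>T\<in>F2. polytope T" "U2 \<inter> T = U2 \<inter> \<Union>F2"
    using assms(2) a unfolding locally_polyhedral_def by auto
  have eq: "(U1 \<inter> U2) \<inter> (S \<inter> T) = (U1 \<inter> U2) \<inter> \<Union>((\<lambda>(A,B). A \<inter> B) ` (F1 \<times> F2))"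
  proof -
    have "(U1 \<inter> U2) \<inter> (S \<inter> T) = (U1 \<inter> U2) \<inter> ((U1 \<inter> S) \<inter> (U2 \<inter> T))" by auto
    also have "\<dots> = (U1 \<inter> U2) \<inter> ((U1 \<inter> \<Union>F1) \<inter> (U2 \<inter> \<Union>F2))" using 1(5) 2(5) by simp
    also have "\<dots> = (U1 \<inter> U2) \<inter> \<Union>((\<lambda>(A,B). A \<inter> B) ` (F1 \<times> F2))" by auto
    finally show ?thesis .
  qed
  show "\<exists>U F. open U \<and> a \<in> U \<and> finite F \<and> (\<forall>T\<in>F. polytope T) \<and> U \<inter> (S \<inter> T) = U \<inter> \<Union>F"
  proof (intro exI conjI)
    show "finite ((\<lambda>(A,B). A \<inter> B) ` (F1 \<times> F2))" using 1(3) 2(3) by simp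
    show "\<forall>X\<in>(\<lambda>(A,B). A \<inter> B) ` (F1 \<times> F2). polytope X" using 1(4) 2(4) by (auto intro: polytope_Int)
    show "open (U1 \<inter> U2)" by (simp add: 1 2 open_Int)
    show "a \<in> U1 \<inter> U2" using 1(2) 2(2) by auto
  qed (rule eq)
qed

lemma lp_Times:
  fixes S :: "'a::euclidean_space set" and T :: "'b::euclidean_space set"
  assumes "locally_polyhedral S" "locally_polyhedral T"
  shows "locally_polyhedral (S \<times> T)"
  unfolding locally_polyhedral_def
proof
  fix a assume a: "a \<in> S \<times> T"
  obtain U1 F1 where 1: "open U1" "fst a \<in> U1" "finite F1" "\<forall>T\<in>F1. polytope T" "U1 \<inter> S = U1 \<inter> \<Union>F1"
    using assms(1) a unfolding locally_polyhedral_def by (metis mem_Times_iff)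
  obtain U2 F2 where 2: "open U2" "snd a \<in> U2" "finite F2" "\<forall>T\<in>F2. polytope T" "U2 \<inter> T = U2 \<inter> \<Union>F2"
    using assms(2) a unfolding locally_polyhedral_def by (metis mem_Times_iff)
  have eq: "(U1 \<times> U2) \<inter> (S \<times> T) = (U1 \<times> U2) \<inter> \<Union>((\<lambda>(A,B). A \<times> B) ` (F1 \<times> F2))"
  proof -
    have "(U1 \<times> U2) \<inter> (S \<times> T) = (U1 \<inter> S) \<times> (U2 \<inter> T)" by auto
    also have "\<dots> = (U1 \<inter> \<Union>F1) \<times> (U2 \<inter> \<Union>F2)" using 1(5) 2(5) by simp
    also have "\<dots> = (U1 \<times> U2) \<inter> \<Union>((\<lambda>(A,B). A \<times> B) ` (F1 \<times> F2))" by auto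
    finally show ?thesis .
  qed
  show "\<exists>U F. open U \<and> a \<in> U \<and> finite F \<and> (\<forall>T\<in>F. polytope T) \<and> U \<inter> (S \<times> T) = U \<inter> \<Union>F"
  proof (intro exI conjI)
    show "finite ((\<lambda>(A,B). A \<times> B) ` (F1 \<times> F2))" using 1(3) 2(3) by simp
    show "\<forall>X\<in>(\<lambda>(A,B). A \<times> B) ` (F1 \<times> F2). polytope X" using 1(4) 2(4) by (auto intro: polytope_Times)
    show "open (U1 \<times> U2)" by (simp add: open_Times 1(1) 2(1))
    show "a \<in> U1 \<times> U2" using 1(2) 2(2) by (cases a) auto
  qed (rule eq)
qed

lemma lp_img:
  fixes S :: "'a::euclidean_space set" and L :: "'a \<Rightarrow> 'b::euclidean_space"
  assumes "locally_polyhedral S" "linear L" "continuous_on (L ` S) R" "\<And>s. s \<in> S \<Longrightarrow> R (L s) = s"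
  shows "locally_polyhedral (L ` S)"
  unfolding locally_polyhedral_def
proof
  fix b assume "b \<in> L ` S"
  then obtain a where a: "a \<in> S" "b = L a" by auto
  obtain U F where F: "open U" "a \<in> U" "finite F" "\<forall>T\<in>F. polytope T" "U \<inter> S = U \<inter> \<Union>F"
    using assms(1) a unfolding locally_polyhedral_def by auto
  obtain C Q where C: "polytope C" "open Q" "a \<in> Q" "Q \<subseteq> C" "C \<subseteq> U"
    using polytope_nbhd[OF F(1,2)] by metis
  obtain A where A: "open A" "A \<inter> L ` S = R -` Q \<inter> L ` S"
    using assms(3) C(2) unfolding continuous_on_open_invariant by auto
  have bA: "b \<in> A" using A a C(3) assms(4) by auto
  have eq: "A \<inter> L ` S = A \<inter> \<Union>((\<lambda>T. L ` (C \<inter> T)) ` F)"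
  proof
    show "A \<inter> L ` S \<subseteq> A \<inter> \<Union>((\<lambda>T. L ` (C \<inter> T)) ` F)"
    proof
      fix y assume y: "y \<in> A \<inter> L ` S"
      then obtain s where s: "s \<in> S" "y = L s" by auto
      have "R y \<in> Q" using A y by auto
      hence "s \<in> C" using s assms(4) C(4) by auto
      hence "s \<in> U \<inter> \<Union>F" using s F(5) C(5) by auto
      then show "y \<in> A \<inter> \<Union>((\<lambda>T. L ` (C \<inter> T)) ` F)" using y s \<open>s \<in> C\<close> by auto
    qed
    show "A \<inter> \<Union>((\<lambda>T. L ` (C \<inter> T)) ` F) \<subseteq> A \<inter> L ` S"
    proof
      fix y assume y: "y \<in> A \<inter> \<Union>((\<lambda>T. L ` (C \<inter> T)) ` F)"
      then obtain T p where p: "T \<in> F" "p \<in> C" "p \<in> T" "y = L p" by auto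
      have "p \<in> U \<inter> S" using p F(5) C(5) by auto
      then show "y \<in> A \<inter> L ` S" using y p by auto
    qed
  qed
  show "\<exists>U F. open U \<and> b \<in> U \<and> finite F \<and> (\<forall>T\<in>F. polytope T) \<and> U \<inter> L ` S = U \<inter> \<Union>F"
  proof (intro exI[of _ A] exI[of _ "(\<lambda>T. L ` (C \<inter> T)) ` F"] conjI)
    show "finite ((\<lambda>T. L ` (C \<inter> T)) ` F)" using F by simp
    show "\<forall>X\<in>(\<lambda>T. L ` (C \<inter> T)) ` F. polytope X" using F(4) C(1) assms(2) by (auto intro!: polytope_linear_image polytope_Int)
  qed (use A(1) bA eq in \<open>simp_all\<close>)
qed


lemma lp_lin_img:
  fixes L :: "'a::euclidean_space \<Rightarrow> 'b::euclidean_space"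
  assumes "locally_polyhedral A" "linear L" "linear L'" "\<And>x. L' (L x) = x"
  shows "locally_polyhedral (L ` A)"
  by (rule lp_img[OF assms(1,2), of L']) (auto intro: linear_continuous_on[OF assms(3)[unfolded linear_conv_bounded_linear]] assms(4))

definition graph :: "'a set \<Rightarrow> ('a \<Rightarrow> 'b) \<Rightarrow> ('a \<times> 'b) set" where
  "graph D f = (\<lambda>x. (x, f x)) ` D"

lemma pl_map_graph: "pl_map D f \<longleftrightarrow> locally_polyhedral D \<and> continuous_on D f \<and> locally_polyhedral (graph D f)"
  by (simp add: pl_map_def graph_def)

lemma pl_map_linear:
  fixes f :: "'a::euclidean_space \<Rightarrow> 'b::euclidean_space"
  assumes "locally_polyhedral D" "linear f"
  shows "pl_map D f"
  unfolding pl_map_def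
proof (intro conjI)
  show "continuous_on D f" by (rule linear_continuous_on[OF assms(2)[unfolded linear_conv_bounded_linear]])
  have l: "linear (\<lambda>x. (x, f x))" using assms(2) by (simp add: linear_iff)
  show "locally_polyhedral ((\<lambda>x. (x, f x)) ` D)"
    by (rule lp_img[OF assms(1) l, of fst]) (auto intro: continuous_intros)
qed (rule assms(1))

lemma lp_sing: "locally_polyhedral {c::'a::euclidean_space}"
  by (rule lp_polyhedron) (simp add: polytope_imp_polyhedron polytope_sing)

lemma pl_map_const:
  fixes c :: "'b::euclidean_space"
  assumes "locally_polyhedral (D::'a::euclidean_space set)"
  shows "pl_map D (\<lambda>x. c)"
  unfolding pl_map_def
proof (intro conjI)
  have "(\<lambda>x. (x, c)) ` D = D \<times> {c}" by auto
  then show "locally_polyhedral ((\<lambda>x. (x, c)) ` D)" using lp_Times[OF assms lp_sing] by simp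
qed (auto simp: assms)

lemma pl_map_subset:
  fixes f :: "'a::euclidean_space \<Rightarrow> 'b::euclidean_space"
  assumes "pl_map D f" "locally_polyhedral E" "E \<subseteq> D"
  shows "pl_map E f"
  unfolding pl_map_def
proof (intro conjI)
  have "(\<lambda>x. (x, f x)) ` E = (\<lambda>x. (x, f x)) ` D \<inter> (E \<times> UNIV)" using assms(3) by auto
  then show "locally_polyhedral ((\<lambda>x. (x, f x)) ` E)"
    using assms(1) lp_Int lp_Times[OF assms(2) lp_UNIV] unfolding pl_map_def by metis
  show "continuous_on E f" using assms(1,3) continuous_on_subset unfolding pl_map_def by metis
qed (rule assms(2))

lemma pl_map_cong:
  assumes "pl_map D f" "D = E" "\<And>x. x \<in> D \<Longrightarrow> f x = g x"
  shows "pl_map E g"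
proof -
  have "(\<lambda>x. (x, f x)) ` D = (\<lambda>x. (x, g x)) ` D" using assms(3) by auto
  then show ?thesis using assms continuous_on_cong unfolding pl_map_def by metis
qed

lemma lp_assoc1:
  fixes G :: "('a::euclidean_space \<times> 'b::euclidean_space) set"
  assumes "locally_polyhedral G"
  shows "locally_polyhedral {(x, (y, z::'c::euclidean_space)). (x, y) \<in> G}"
proof -
  have "{(x, (y, z::'c)). (x, y) \<in> G} = (\<lambda>p. (fst (fst p), (snd (fst p), snd p))) ` (G \<times> UNIV)"
    by (auto simp: image_iff) (metis fst_conv snd_conv)
  moreover have "locally_polyhedral ((\<lambda>p. (fst (fst p), (snd (fst p), snd p))) ` (G \<times> (UNIV::'c set)))"
    by (rule lp_lin_img[of _ _ "\<lambda>q. ((fst q, fst (snd q)), snd (snd q))"])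
       (auto simp: linear_iff intro: lp_Times assms lp_UNIV)
  ultimately show ?thesis by simp
qed

lemma lp_assoc2:
  fixes G :: "('a::euclidean_space \<times> 'c::euclidean_space) set"
  assumes "locally_polyhedral G"
  shows "locally_polyhedral {(x, (y::'b::euclidean_space, z)). (x, z) \<in> G}"
proof -
  have "{(x, (y::'b, z)). (x, z) \<in> G} = (\<lambda>p. (fst (fst p), (snd p, snd (fst p)))) ` (G \<times> UNIV)"
    by (auto simp: image_iff) (metis fst_conv snd_conv)
  moreover have "locally_polyhedral ((\<lambda>p. (fst (fst p), (snd p, snd (fst p)))) ` (G \<times> (UNIV::'b set)))"
    by (rule lp_lin_img[of _ _ "\<lambda>q. ((fst q, snd (snd q)), fst (snd q))"])
       (auto simp: linear_iff intro: lp_Times assms lp_UNIV)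
  ultimately show ?thesis by simp
qed

lemma pl_map_pair:
  fixes f :: "'a::euclidean_space \<Rightarrow> 'b::euclidean_space" and g :: "'a \<Rightarrow> 'c::euclidean_space"
  assumes "pl_map D f" "pl_map D g"
  shows "pl_map D (\<lambda>x. (f x, g x))"
  unfolding pl_map_def
proof (intro conjI)
  show "locally_polyhedral D" using assms unfolding pl_map_def by auto
  show "continuous_on D (\<lambda>x. (f x, g x))" using assms unfolding pl_map_def by (auto intro: continuous_intros)
  have eq: "(\<lambda>x. (x, (f x, g x))) ` D = {(x, (y, z)). (x, y) \<in> (\<lambda>x. (x, f x)) ` D} \<inter> {(x, (y, z)). (x, z) \<in> (\<lambda>x. (x, g x)) ` D}"
    by (auto simp: image_iff)
  have G1: "locally_polyhedral ((\<lambda>x. (x, f x)) ` D)" using assms(1) unfolding pl_map_def by auto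
  have G2: "locally_polyhedral ((\<lambda>x. (x, g x)) ` D)" using assms(2) unfolding pl_map_def by auto
  show "locally_polyhedral ((\<lambda>x. (x, (f x, g x))) ` D)"
    unfolding eq by (rule lp_Int[OF lp_assoc1[OF G1] lp_assoc2[OF G2]])
qed

lemma pl_map_compose:
  fixes f :: "'a::euclidean_space \<Rightarrow> 'b::euclidean_space" and g :: "'b \<Rightarrow> 'c::euclidean_space"
  assumes "pl_map D f" "pl_map E g" "f ` D \<subseteq> E"
  shows "pl_map D (\<lambda>x. g (f x))"
  unfolding pl_map_def
proof (intro conjI)
  show lD: "locally_polyhedral D" using assms unfolding pl_map_def by auto
  have cf: "continuous_on D f" and cg: "continuous_on E g" using assms unfolding pl_map_def by auto
  show "continuous_on D (\<lambda>x. g (f x))"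
    using continuous_on_compose[OF cf continuous_on_subset[OF cg assms(3)]] by (simp add: o_def)
  define S where "S = {(x, (y, z)). (x, y) \<in> (\<lambda>x. (x, f x)) ` D} \<inter> (UNIV \<times> (\<lambda>y. (y, g y)) ` E)"
  have G1: "locally_polyhedral ((\<lambda>x. (x, f x)) ` D)" using assms(1) unfolding pl_map_def by auto
  have G2: "locally_polyhedral ((\<lambda>x. (x, g x)) ` E)" using assms(2) unfolding pl_map_def by auto
  have lS: "locally_polyhedral S"
    unfolding S_def by (rule lp_Int[OF lp_assoc1[OF G1] lp_Times[OF lp_UNIV G2]])
  have eq: "(\<lambda>x. (x, g (f x))) ` D = (\<lambda>p. (fst p, snd (snd p))) ` S"
  proof
    show "(\<lambda>x. (x, g (f x))) ` D \<subseteq> (\<lambda>p. (fst p, snd (snd p))) ` S"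
    proof
      fix p assume "p \<in> (\<lambda>x. (x, g (f x))) ` D"
      then obtain x where x: "x \<in> D" "p = (x, g (f x))" by auto
      then have "(x, (f x, g (f x))) \<in> S" using assms(3) unfolding S_def by auto
      then show "p \<in> (\<lambda>p. (fst p, snd (snd p))) ` S" using x by (auto intro: rev_image_eqI)
    qed
    show "(\<lambda>p. (fst p, snd (snd p))) ` S \<subseteq> (\<lambda>x. (x, g (f x))) ` D"
      unfolding S_def by auto
  qed
  have "locally_polyhedral ((\<lambda>p. (fst p, snd (snd p))) ` S)"
  proof (rule lp_img[OF lS, of _ "\<lambda>q. (fst q, (f (fst q), snd q))"])
    show "linear (\<lambda>p::'a \<times> 'b \<times> 'c. (fst p, snd (snd p)))" by (simp add: linear_iff)
    have "fst ` ((\<lambda>p. (fst p, snd (snd p))) ` S) \<subseteq> D" unfolding S_def by auto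
    then show "continuous_on ((\<lambda>p. (fst p, snd (snd p))) ` S) (\<lambda>q. (fst q, f (fst q), snd q))"
      by (intro continuous_intros continuous_on_compose2[OF cf]) auto
    show "\<And>s. s \<in> S \<Longrightarrow> (fst (fst s, snd (snd s)), f (fst (fst s, snd (snd s))), snd (fst s, snd (snd s))) = s"
      unfolding S_def by auto
  qed
  then show "locally_polyhedral ((\<lambda>x. (x, g (f x))) ` D)" using eq by simp
qed


lemma pl_map_local:
  fixes f :: "'a::euclidean_space \<Rightarrow> 'b::euclidean_space"
  assumes lD: "locally_polyhedral D"
    and loc: "\<And>a. a \<in> D \<Longrightarrow> \<exists>U E g. open U \<and> a \<in> U \<and> pl_map E g \<and> D \<inter> U \<subseteq> E \<and> (\<forall>x\<in>D \<inter> U. f x = g x)"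
  shows "pl_map D f"
  unfolding pl_map_def
proof (intro conjI)
  show "continuous_on D f"
    unfolding continuous_on_iff
  proof (intro ballI allI impI)
    fix a and e :: real assume a: "a \<in> D" and e: "0 < e"
    obtain U E g where U: "open U" "a \<in> U" "pl_map E g" "D \<inter> U \<subseteq> E" "\<forall>x\<in>D \<inter> U. f x = g x"
      using loc[OF a] by metis
    have "continuous_on (D \<inter> U) g" using U(3,4) continuous_on_subset unfolding pl_map_def by metis
    then obtain d1 where d1: "d1 > 0" "\<forall>x'\<in>D \<inter> U. dist x' a < d1 \<longrightarrow> dist (g x') (g a) < e"
      using a U(2) e unfolding continuous_on_iff by (metis IntI)
    obtain d2 where d2: "d2 > 0" "ball a d2 \<subseteq> U" using U(1,2) open_contains_ball by metis
    show "\<exists>d>0. \<forall>x'\<in>D. dist x' a < d \<longrightarrow> dist (f x') (f a) < e"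
    proof (intro exI[of _ "min d1 d2"] conjI ballI impI)
      fix x' assume x': "x' \<in> D" "dist x' a < min d1 d2"
      then have "x' \<in> U" using d2 by (auto simp: dist_commute)
      then show "dist (f x') (f a) < e" using x' d1 U(2,5) a by auto
    qed (use d1 d2 in auto)
  qed
  show "locally_polyhedral ((\<lambda>x. (x, f x)) ` D)"
  proof (rule lp_local)
    fix q assume "q \<in> (\<lambda>x. (x, f x)) ` D"
    then obtain a where a: "a \<in> D" "q = (a, f a)" by auto
    obtain U E g where U: "open U" "a \<in> U" "pl_map E g" "D \<inter> U \<subseteq> E" "\<forall>x\<in>D \<inter> U. f x = g x"
      using loc[OF a(1)] by metis
    have "locally_polyhedral ((\<lambda>x. (x, g x)) ` E)" using U(3) unfolding pl_map_def by auto
    then have lT: "locally_polyhedral ((\<lambda>x. (x, g x)) ` E \<inter> (D \<times> UNIV))"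
      using lp_Int lp_Times[OF lD lp_UNIV] by blast
    have eq: "(U \<times> UNIV) \<inter> (\<lambda>x. (x, f x)) ` D = (U \<times> UNIV) \<inter> ((\<lambda>x. (x, g x)) ` E \<inter> (D \<times> UNIV))"
    proof (rule Set.set_eqI, rule iffI)
      fix p assume "p \<in> (U \<times> UNIV) \<inter> (\<lambda>x. (x, f x)) ` D"
      then obtain x where x: "x \<in> D" "x \<in> U" "p = (x, f x)" by auto
      then have "x \<in> E" "f x = g x" using U(4,5) by auto
      then show "p \<in> (U \<times> UNIV) \<inter> ((\<lambda>x. (x, g x)) ` E \<inter> (D \<times> UNIV))" using x by auto
    next
      fix p assume "p \<in> (U \<times> UNIV) \<inter> ((\<lambda>x. (x, g x)) ` E \<inter> (D \<times> UNIV))"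
      then obtain x where x: "x \<in> D" "x \<in> U" "p = (x, g x)" by auto
      then have "f x = g x" using U(5) by auto
      then show "p \<in> (U \<times> UNIV) \<inter> (\<lambda>x. (x, f x)) ` D" using x by auto
    qed
    show "\<exists>U T. open U \<and> q \<in> U \<and> locally_polyhedral T \<and> U \<inter> (\<lambda>x. (x, f x)) ` D = U \<inter> T"
      apply (rule exI[of _ "U \<times> UNIV"], rule exI[of _ "(\<lambda>x. (x, g x)) ` E \<inter> (D \<times> UNIV)"])
      apply (intro conjI)
      apply (simp add: open_Times U(1))
      apply (simp add: a(2) U(2))
      apply (rule lT)
      by (rule eq)
  qed
qed (rule lD)

lemma graph_max: "locally_polyhedral ((\<lambda>x::real\<times>real. (x, max (fst x) (snd x))) ` UNIV)"
proof -
  have h1: "polyhedron ({p::(real \<times> real) \<times> real. ((-1,0),1) \<bullet> p = 0} \<inter> {p. ((-1,1),0) \<bullet> p \<le> 0})"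
    by (intro polyhedron_Int polyhedron_hyperplane polyhedron_halfspace_le)
  have h2: "polyhedron ({p::(real \<times> real) \<times> real. ((0,-1),1) \<bullet> p = 0} \<inter> {p. ((1,-1),0) \<bullet> p \<le> 0})"
    by (intro polyhedron_Int polyhedron_hyperplane polyhedron_halfspace_le)
  have eq: "(\<lambda>x::real\<times>real. (x, max (fst x) (snd x))) ` UNIV = 
      ({p::(real \<times> real) \<times> real. ((-1,0),1) \<bullet> p = 0} \<inter> {p. ((-1,1),0) \<bullet> p \<le> 0}) \<union>
       ({p::(real \<times> real) \<times> real. ((0,-1),1) \<bullet> p = 0} \<inter> {p. ((1,-1),0) \<bullet> p \<le> 0})"
    by (auto simp: inner_prod_def image_iff max_def split: if_splits)
  show ?thesis unfolding eq using lp_polyhedra_Union[of "{_, _}"] h1 h2 by auto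
qed

lemma pl_map_max: "pl_map UNIV (\<lambda>p::real \<times> real. max (fst p) (snd p))"
  unfolding pl_map_def
  by (intro conjI lp_UNIV graph_max) (intro continuous_intros)

lemma pl_map_linear_compose:
  fixes f :: "'a::euclidean_space \<Rightarrow> 'b::euclidean_space" and L :: "'b \<Rightarrow> 'c::euclidean_space"
  assumes "pl_map D f" "linear L"
  shows "pl_map D (\<lambda>x. L (f x))"
  by (rule pl_map_compose[OF assms(1) pl_map_linear[OF lp_UNIV assms(2)]]) auto

lemma pl_map_add:
  fixes f g :: "'a::euclidean_space \<Rightarrow> 'b::euclidean_space"
  assumes "pl_map D f" "pl_map D g"
  shows "pl_map D (\<lambda>x. f x + g x)"
  using pl_map_linear_compose[OF pl_map_pair[OF assms], of "\<lambda>p. fst p + snd p"] by (simp add: linear_iff algebra_simps)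

lemma pl_map_diff:
  fixes f g :: "'a::euclidean_space \<Rightarrow> 'b::euclidean_space"
  assumes "pl_map D f" "pl_map D g"
  shows "pl_map D (\<lambda>x. f x - g x)"
  using pl_map_linear_compose[OF pl_map_pair[OF assms], of "\<lambda>p. fst p - snd p"] by (simp add: linear_iff algebra_simps)

lemma pl_map_maxf:
  fixes f g :: "'a::euclidean_space \<Rightarrow> real"
  assumes "pl_map D f" "pl_map D g"
  shows "pl_map D (\<lambda>x. max (f x) (g x))"
  using pl_map_compose[OF pl_map_pair[OF assms] pl_map_max] by simp

lemma pl_map_minf:
  fixes f g :: "'a::euclidean_space \<Rightarrow> real"
  assumes "pl_map D f" "pl_map D g"
  shows "pl_map D (\<lambda>x. min (f x) (g x))"
proof -
  have a: "pl_map D (\<lambda>x. - f x)" "pl_map D (\<lambda>x. - g x)"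
    using pl_map_linear_compose[OF assms(1), of uminus] pl_map_linear_compose[OF assms(2), of uminus]
    by (auto simp: linear_iff)
  have "pl_map D (\<lambda>x. - max (- f x) (- g x))"
    using pl_map_linear_compose[OF pl_map_maxf[OF a], of uminus] by (auto simp: linear_iff)
  then show ?thesis by (rule pl_map_cong) (auto simp: max_def min_def)
qed

lemma pl_map_sum:
  fixes f :: "'i \<Rightarrow> 'a::euclidean_space \<Rightarrow> 'b::euclidean_space"
  assumes "finite I" "locally_polyhedral D" "\<And>i. i \<in> I \<Longrightarrow> pl_map D (f i)"
  shows "pl_map D (\<lambda>x. \<Sum>i\<in>I. f i x)"
  using assms
proof (induction I rule: finite_induct)
  case empty
  then show ?case using pl_map_const[OF assms(2), of 0] by simp
next
  case (insert i I)
  then show ?case using pl_map_add[of D "f i" "\<lambda>x. \<Sum>i\<in>I. f i x"] by simp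
qed


definition aj :: "real \<Rightarrow> nat \<Rightarrow> real \<Rightarrow> real" where
  "aj e j t = e * max 0 (min 1 (2^(j+1) * (1 - t) - 1))"

definition br :: "real \<Rightarrow> nat \<Rightarrow> real \<Rightarrow> real \<Rightarrow> real" where
  "br e j t s = max 0 (min s e - aj e j t) - max 0 (min (-s) e - aj e j t)"

definition phi :: "real \<Rightarrow> real \<Rightarrow> real \<Rightarrow> real" where
  "phi e t s = s + suminf (\<lambda>j. br e j t s)"

lemma pow2_ge:
  assumes "K \<le> j" shows "(2::real) \<le> 2^(j+1) * (1/2)^K"
proof -
  have "(2::real)^(j+1) * (1/2)^K = 2^(j+1) / 2^K" by (simp add: power_one_over)
  also have "\<dots> = 2^(j+1-K)" using assms by (simp add: power_diff)
  also have "(2::real) = 2^1" by simp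
  hence "(2::real) \<le> 2^(j+1-K)" using assms by (metis Suc_eq_plus1 Suc_diff_le le_add1 one_le_numeral power_increasing plus_1_eq_Suc)
  finally show ?thesis using \<open>(2::real) \<le> 2^(j+1-K)\<close> by (simp add: power_one_over power_diff assms)
qed

lemma pow2_le:
  assumes "j < k" shows "(2::real)^(j+1) * (1/2)^k \<le> 1"
proof -
  have "(2::real)^(j+1) * (1/2)^k = 2^(j+1) / 2^k" by (simp add: power_one_over)
  also have "\<dots> \<le> 1"
  proof -
    have "(2::real)^(j+1) \<le> 2^k" by (rule power_increasing) (use assms in auto)
    then show ?thesis by simp
  qed
  finally show ?thesis .
qed

lemma aj_big:
  assumes "(1/2)^K < 1 - t" "K \<le> j"
  shows "aj e j t = e"
proof -
  have "(2::real)^(j+1) * (1/2)^K < 2^(j+1) * (1 - t)" using assms(1) by simp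
  then have "2 < 2^(j+1) * (1 - t)" using pow2_ge[OF assms(2)] by linarith
  then show ?thesis unfolding aj_def by simp
qed

lemma aj_zero:
  assumes "1 - t \<le> (1/2)^k" "j < k"
  shows "aj e j t = 0"
proof -
  have "(2::real)^(j+1) * (1 - t) \<le> 2^(j+1) * (1/2)^k" using assms(1) by simp
  then have "2^(j+1) * (1 - t) \<le> (1::real)" using pow2_le[OF assms(2)] by linarith
  then show ?thesis unfolding aj_def by simp
qed

lemma aj_t0: "aj e j 0 = e"
proof -
  have "(2::real) \<le> 2^(j+1)" by (metis Suc_eq_plus1 le_add2 one_le_numeral power_increasing power_one_right plus_1_eq_Suc)
  then show ?thesis unfolding aj_def by simp
qed

lemma aj_bounds: "0 \<le> e \<Longrightarrow> 0 \<le> aj e j t \<and> aj e j t \<le> e"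
proof -
  assume e: "0 \<le> e"
  define m where "m = max 0 (min 1 (2^(j+1) * (1 - t) - 1::real))"
  have m: "0 \<le> m" "m \<le> 1" unfolding m_def by auto
  have "aj e j t = e * m" unfolding aj_def m_def by simp
  moreover have "e * m \<le> e * 1" using m e by (intro mult_left_mono) auto
  ultimately show ?thesis using m e by simp
qed

lemma br_zero: "aj e j t = e \<Longrightarrow> br e j t s = 0"
  unfolding br_def by simp

lemma br_odd: "br e j t (-s) = - br e j t s"
  unfolding br_def by simp

lemma br_mono: "s \<le> s' \<Longrightarrow> br e j t s \<le> br e j t s'"
  unfolding br_def by (auto simp: max_def min_def)

lemma br_nonneg: "0 \<le> s \<Longrightarrow> 0 \<le> aj e j t \<Longrightarrow> 0 \<le> br e j t s"
  unfolding br_def by (auto simp: max_def min_def)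

lemma br_full: "aj e j t = 0 \<Longrightarrow> 0 < e \<Longrightarrow> e \<le> s \<Longrightarrow> br e j t s = e"
  unfolding br_def by (auto simp: max_def min_def)

lemma exK: "t < 1 \<Longrightarrow> \<exists>K. (1/2::real)^K < 1 - t"
  using real_arch_pow_inv[of "1 - t" "1/2"] by auto

lemma phi_finite:
  assumes "(1/2)^K < 1 - t"
  shows "phi e t s = s + (\<Sum>j<K. br e j t s)"
proof -
  have "suminf (\<lambda>j. br e j t s) = (\<Sum>j\<in>{..<K}. br e j t s)"
    by (rule suminf_finite) (auto intro!: br_zero aj_big[OF assms])
  then show ?thesis unfolding phi_def by simp
qed

lemma phi_0: "phi e 0 s = s"
  using phi_finite[of 1 0 e s] by (simp add: br_zero aj_t0)

lemma phi_mono: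
  assumes "t < 1" "s \<le> s'"
  shows "s' - s \<le> phi e t s' - phi e t s"
proof -
  obtain K where K: "(1/2::real)^K < 1 - t" using exK[OF assms(1)] by auto
  have "(\<Sum>j<K. br e j t s) \<le> (\<Sum>j<K. br e j t s')"
    by (rule sum_mono) (rule br_mono[OF assms(2)])
  then show ?thesis using phi_finite[OF K] by simp
qed

lemma phi_strict:
  assumes "t < 1" "s < s'"
  shows "phi e t s < phi e t s'"
  using phi_mono[OF assms(1) less_imp_le[OF assms(2)], of e] assms(2) by simp

lemma phi_odd:
  assumes "t < 1"
  shows "phi e t (-s) = - phi e t s"
proof -
  obtain K where K: "(1/2::real)^K < 1 - t" using exK[OF assms(1)] by auto
  show ?thesis using phi_finite[OF K] by (simp add: br_odd sum_negf)
qed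

lemma phi_zero:
  assumes "t < 1" shows "phi e t 0 = 0"
  using phi_odd[OF assms, of e 0] by simp

lemma phi_ge:
  assumes "t < 1" "0 \<le> s" "0 \<le> e"
  shows "s \<le> phi e t s"
proof -
  obtain K where K: "(1/2::real)^K < 1 - t" using exK[OF assms(1)] by auto
  have "0 \<le> (\<Sum>j<K. br e j t s)"
    by (rule sum_nonneg) (use br_nonneg assms aj_bounds in blast)
  then show ?thesis using phi_finite[OF K] by simp
qed

lemma phi_escape:
  assumes "t < 1" "1 - t \<le> (1/2)^k" "0 < e" "e \<le> s"
  shows "s + real k * e \<le> phi e t s"
proof -
  obtain K0 where K0: "(1/2::real)^K0 < 1 - t" using exK[OF assms(1)] by auto
  define K where "K = max K0 k"
  have "(1/2::real)^K \<le> (1/2)^K0" unfolding K_def by (rule power_decreasing) auto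
  hence K: "(1/2::real)^K < 1 - t" using K0 by linarith
  have kK: "k \<le> K" unfolding K_def by simp
  have "(\<Sum>j<K. br e j t s) = (\<Sum>j<k. br e j t s) + (\<Sum>j\<in>{k..<K}. br e j t s)"
    using kK by (metis le0 sum.atLeastLessThan_concat lessThan_atLeast0)
  moreover have "(\<Sum>j<k. br e j t s) = real k * e"
    using br_full[OF aj_zero[OF assms(2)] assms(3,4)] by simp
  moreover have "0 \<le> (\<Sum>j\<in>{k..<K}. br e j t s)"
    by (rule sum_nonneg) (use br_nonneg assms aj_bounds in auto)
  ultimately show ?thesis using phi_finite[OF K] by simp
qed

lemma phi_abs_escape:
  assumes "t < 1" "1 - t \<le> (1/2)^k" "0 < e" "e \<le> \<bar>s\<bar>"
  shows "real (k+1) * e \<le> \<bar>phi e t s\<bar>"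
proof (cases "0 \<le> s")
  case True
  then show ?thesis using phi_escape[OF assms(1-3), of s] assms(4) by (simp add: algebra_simps)
next
  case False
  then have "e \<le> -s" using assms(4) by simp
  then have "- s + real k * e \<le> phi e t (-s)" by (rule phi_escape[OF assms(1-3)])
  then have "- s + real k * e \<le> - phi e t s" using phi_odd[OF assms(1)] by simp
  then show ?thesis using False assms(4) by (simp add: algebra_simps)
qed


lemma lp_unit_interval: "locally_polyhedral {0..1::real}"
  using lp_polyhedron[OF polyhedron_interval[of "0::real" 1]] by (simp add: cbox_interval)

lemma lp_halfopen: "locally_polyhedral {0..<1::real}"
proof -
  have "{0..<1::real} = {..<1} \<inter> {0..1}" by auto
  then show ?thesis using lp_Int[OF lp_open[OF open_lessThan] lp_unit_interval] by simp
qed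

lemma lp_strip: "locally_polyhedral ({0..<1::real} \<times> (UNIV::'a::euclidean_space set))"
  by (rule lp_Times[OF lp_halfopen lp_UNIV])

lemma pl_aff: "pl_map UNIV (\<lambda>p::real\<times>real. a * fst p + b * snd p + c)"
proof -
  have "pl_map UNIV (\<lambda>p::real\<times>real. a * fst p + b * snd p)"
    by (rule pl_map_linear[OF lp_UNIV]) (simp add: linear_iff algebra_simps)
  then show ?thesis using pl_map_add[OF _ pl_map_const[OF lp_UNIV]] by blast
qed

lemma pl_aj: "pl_map UNIV (\<lambda>p::real\<times>real. aj e j (fst p))"
proof -
  have "pl_map UNIV (\<lambda>p::real\<times>real. max 0 (min 1 ((-(2^(j+1))) * fst p + 0 * snd p + (2^(j+1) - 1))))"
    by (intro pl_map_maxf pl_map_minf pl_map_const lp_UNIV pl_aff)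
  then have "pl_map UNIV (\<lambda>p::real\<times>real. e * max 0 (min 1 ((-(2^(j+1))) * fst p + 0 * snd p + (2^(j+1) - 1))))"
    by (rule pl_map_linear_compose) (simp add: linear_iff algebra_simps)
  then show ?thesis by (rule pl_map_cong) (auto simp: aj_def algebra_simps)
qed

lemma pl_br: "pl_map UNIV (\<lambda>p::real\<times>real. br e j (fst p) (snd p))"
proof -
  have "pl_map UNIV (\<lambda>p::real\<times>real. max 0 (min (0 * fst p + 1 * snd p + 0) e - aj e j (fst p))
         - max 0 (min (0 * fst p + (-1) * snd p + 0) e - aj e j (fst p)))"
    by (intro pl_map_diff pl_map_maxf pl_map_minf pl_map_const lp_UNIV pl_aff pl_aj)
  then show ?thesis by (rule pl_map_cong) (auto simp: br_def)
qed

lemma pl_phiK: "pl_map UNIV (\<lambda>p::real\<times>real. snd p + (\<Sum>j<K. br e j (fst p) (snd p)))"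
proof -
  have "pl_map UNIV (\<lambda>p::real\<times>real. snd p)" by (rule pl_map_linear[OF lp_UNIV]) (simp add: linear_iff)
  moreover have "pl_map UNIV (\<lambda>p::real\<times>real. (\<Sum>j<K. br e j (fst p) (snd p)))"
    by (rule pl_map_sum) (auto intro: lp_UNIV pl_br)
  ultimately show ?thesis by (rule pl_map_add)
qed

lemma pl_phi: "pl_map ({0..<1} \<times> UNIV) (\<lambda>p. phi e (fst p) (snd p))"
proof (rule pl_map_local[OF lp_strip])
  fix a :: "real \<times> real" assume a: "a \<in> {0..<1} \<times> UNIV"
  then have "fst a < 1" by auto
  then obtain K where K: "(1/2::real)^K < 1 - fst a" using exK by blast
  define U where "U = {p::real\<times>real. fst p < 1 - (1/2)^K}"
  have "open U" unfolding U_def by (intro open_Collect_less continuous_intros)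
  moreover have "a \<in> U" using K unfolding U_def by simp
  moreover have "\<forall>x\<in>({0..<1} \<times> UNIV) \<inter> U. phi e (fst x) (snd x) = snd x + (\<Sum>j<K. br e j (fst x) (snd x))"
    using phi_finite unfolding U_def by force
  ultimately show "\<exists>U E g. open U \<and> a \<in> U \<and> pl_map E g \<and> ({0..<1} \<times> UNIV) \<inter> U \<subseteq> E \<and>
      (\<forall>x\<in>({0..<1} \<times> UNIV) \<inter> U. phi e (fst x) (snd x) = g x)"
    using pl_phiK[where K=K and e=e] by blast
qed

lemma cont_phi: "continuous_on ({0..<1} \<times> UNIV) (\<lambda>p. phi e (fst p) (snd p))"
  using pl_phi unfolding pl_map_def by blast

lemma cont_phi_s:
  assumes "0 \<le> t" "t < 1"
  shows "continuous_on A (\<lambda>s. phi e t s)"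
proof -
  have "continuous_on A (\<lambda>s. (t, s))" by (intro continuous_intros)
  moreover have "(\<lambda>s. (t, s)) ` A \<subseteq> {0..<1} \<times> UNIV" using assms by auto
  ultimately have "continuous_on A (\<lambda>s. phi e (fst (t, s)) (snd (t, s)))"
    by (rule continuous_on_compose2[OF cont_phi])
  then show ?thesis by simp
qed

lemma phi_surj:
  assumes "0 \<le> t" "t < 1" "0 \<le> e"
  shows "\<exists>s. phi e t s = z"
proof (cases "0 \<le> z")
  case True
  have "phi e t 0 \<le> z" "z \<le> phi e t z" using phi_zero[OF assms(2)] phi_ge[OF assms(2) True assms(3)] True by auto
  then show ?thesis using IVT'[of "phi e t" 0 z z] cont_phi_s[OF assms(1,2)] True by blast
next
  case False
  have "z \<le> 0" using False by simp
  have "phi e t z \<le> z"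
    using phi_ge[OF assms(2), of "-z" e] phi_odd[OF assms(2), of e z] False assms(3) by simp
  moreover have "z \<le> phi e t 0" using phi_zero[OF assms(2)] False by simp
  ultimately show ?thesis using IVT'[of "phi e t" z z 0] cont_phi_s[OF assms(1,2)] False by force
qed

definition phinv :: "real \<Rightarrow> real \<Rightarrow> real \<Rightarrow> real" where
  "phinv e t z = (THE s. phi e t s = z)"

lemma phi_inj:
  assumes "t < 1" "phi e t s = phi e t s'"
  shows "s = s'"
  using phi_strict[OF assms(1), of s s' e] phi_strict[OF assms(1), of s' s e] assms(2)
  by (cases s s' rule: linorder_cases) auto

lemma phi_phinv:
  assumes "0 \<le> t" "t < 1" "0 \<le> e"
  shows "phi e t (phinv e t z) = z"
proof -
  obtain s where s: "phi e t s = z" using phi_surj[OF assms] by blast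
  have "(THE s. phi e t s = z) = s" using s phi_inj[OF assms(2)] by blast
  then show ?thesis unfolding phinv_def using s by simp
qed

lemma phinv_phi:
  assumes "0 \<le> t" "t < 1" "0 \<le> e"
  shows "phinv e t (phi e t s) = s"
  using phi_inj[OF assms(2) phi_phinv[OF assms]] .


lemma cont_phinv:
  assumes e: "0 \<le> e"
  shows "continuous_on ({0..<1} \<times> UNIV) (\<lambda>p. phinv e (fst p) (snd p))"
proof -
  define F where "F = (\<lambda>p::real\<times>real. (fst p, phi e (max 0 (fst p)) (snd p)))"
  define S where "S = {-1<..<1::real} \<times> (UNIV::real set)"
  have oS: "open S" unfolding S_def by (intro open_Times) auto
  have c1: "continuous_on S (\<lambda>p::real\<times>real. (max 0 (fst p), snd p))" by (intro continuous_intros)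
  have i1: "(\<lambda>p::real\<times>real. (max 0 (fst p), snd p)) ` S \<subseteq> {0..<1} \<times> UNIV" unfolding S_def by auto
  have "continuous_on S (\<lambda>p. phi e (fst (max 0 (fst p), snd p)) (snd (max 0 (fst p), snd p)))"
    by (rule continuous_on_compose2[OF cont_phi c1 i1])
  then have cc: "continuous_on S (\<lambda>p. phi e (max 0 (fst p)) (snd p))" by simp
  have cF: "continuous_on S F" unfolding F_def by (rule continuous_on_Pair[OF continuous_on_fst[OF continuous_on_id] cc])
  have iF: "inj_on F S"
  proof (rule inj_onI)
    fix p q assume pq: "p \<in> S" "q \<in> S" "F p = F q"
    then have f: "fst p = fst q" unfolding F_def by auto
    have "max 0 (fst p) < 1" using pq(1) unfolding S_def by auto
    moreover have "phi e (max 0 (fst p)) (snd p) = phi e (max 0 (fst p)) (snd q)" using pq(3) f unfolding F_def by auto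
    ultimately have "snd p = snd q" by (rule phi_inj)
    then show "p = q" using f by (simp add: prod_eq_iff)
  qed
  obtain G where G: "homeomorphism S (F ` S) F G"
    using invariance_of_domain_homeomorphism[OF oS cF _ iF] by auto
  have sub: "{0..<1} \<times> UNIV \<subseteq> F ` S"
  proof
    fix p :: "real \<times> real" assume p: "p \<in> {0..<1} \<times> UNIV"
    then have "(fst p, phinv e (fst p) (snd p)) \<in> S" unfolding S_def by auto
    moreover have "F (fst p, phinv e (fst p) (snd p)) = p" using p phi_phinv[OF _ _ e] unfolding F_def by auto
    ultimately show "p \<in> F ` S" by (metis image_eqI)
  qed
  have "continuous_on ({0..<1} \<times> UNIV) (\<lambda>p. snd (G p))"
    using continuous_on_subset[OF homeomorphism_cont2[OF G] sub] by (intro continuous_intros)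
  moreover have "snd (G p) = phinv e (fst p) (snd p)" if p: "p \<in> {0..<1} \<times> UNIV" for p
  proof -
    have "(fst p, phinv e (fst p) (snd p)) \<in> S" using p unfolding S_def by auto
    moreover have "F (fst p, phinv e (fst p) (snd p)) = p" using p phi_phinv[OF _ _ e] unfolding F_def by auto
    ultimately have "G p = (fst p, phinv e (fst p) (snd p))" using homeomorphism_apply1[OF G] by metis
    then show ?thesis by simp
  qed
  ultimately show ?thesis using continuous_on_cong by fastforce
qed

lemma pl_phinv:
  assumes e: "0 \<le> e"
  shows "pl_map ({0..<1} \<times> UNIV) (\<lambda>p. phinv e (fst p) (snd p))"
  unfolding pl_map_def
proof (intro conjI lp_strip cont_phinv[OF e])
  define sw where "sw = (\<lambda>q::(real\<times>real)\<times>real. ((fst (fst q), snd q), snd (fst q)))"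
  have eq: "(\<lambda>p. (p, phinv e (fst p) (snd p))) ` ({0..<1} \<times> UNIV) = sw ` ((\<lambda>p. (p, phi e (fst p) (snd p))) ` ({0..<1} \<times> UNIV))"
  proof
    show "(\<lambda>p. (p, phinv e (fst p) (snd p))) ` ({0..<1} \<times> UNIV) \<subseteq> sw ` ((\<lambda>p. (p, phi e (fst p) (snd p))) ` ({0..<1} \<times> UNIV))"
    proof
      fix q assume "q \<in> (\<lambda>p. (p, phinv e (fst p) (snd p))) ` ({0..<1} \<times> UNIV)"
      then obtain t z where tz: "0 \<le> t" "t < 1" "q = ((t, z), phinv e t z)" by auto
      have "q = sw ((t, phinv e t z), phi e t (phinv e t z))" using tz phi_phinv[OF tz(1,2) e] unfolding sw_def by simp
      moreover have "((t, phinv e t z), phi e t (phinv e t z)) \<in> (\<lambda>p. (p, phi e (fst p) (snd p))) ` ({0..<1} \<times> UNIV)"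
        using tz by (auto intro: image_eqI[where x="(t, phinv e t z)"])
      ultimately show "q \<in> sw ` ((\<lambda>p. (p, phi e (fst p) (snd p))) ` ({0..<1} \<times> UNIV))" by blast
    qed
    show "sw ` ((\<lambda>p. (p, phi e (fst p) (snd p))) ` ({0..<1} \<times> UNIV)) \<subseteq> (\<lambda>p. (p, phinv e (fst p) (snd p))) ` ({0..<1} \<times> UNIV)"
    proof
      fix q assume "q \<in> sw ` ((\<lambda>p. (p, phi e (fst p) (snd p))) ` ({0..<1} \<times> UNIV))"
      then obtain t s where ts: "0 \<le> t" "t < 1" "q = ((t, phi e t s), s)" unfolding sw_def by auto
      then have "q = ((t, phi e t s), phinv e t (phi e t s))" using phinv_phi[OF ts(1,2) e] by simp
      then show "q \<in> (\<lambda>p. (p, phinv e (fst p) (snd p))) ` ({0..<1} \<times> UNIV)"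
        using ts by (auto intro: image_eqI[where x="(t, phi e t s)"])
    qed
  qed
  have "locally_polyhedral ((\<lambda>p. (p, phi e (fst p) (snd p))) ` ({0..<1::real} \<times> (UNIV::real set)))"
    using pl_phi unfolding pl_map_def by blast
  then have "locally_polyhedral (sw ` ((\<lambda>p. (p, phi e (fst p) (snd p))) ` ({0..<1} \<times> UNIV)))"
    by (rule lp_lin_img[of _ _ sw]) (auto simp: sw_def linear_iff)
  then show "locally_polyhedral ((\<lambda>p. (p, phinv e (fst p) (snd p))) ` ({0..<1} \<times> UNIV))"
    by (simp only: eq)
qed


definition psi :: "real \<Rightarrow> real \<Rightarrow> 'v::euclidean_space \<Rightarrow> 'v" where
  "psi e t y = (\<Sum>b\<in>Basis. phi e t (y \<bullet> b) *\<^sub>R b)"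

definition chi :: "real \<Rightarrow> real \<Rightarrow> 'v::euclidean_space \<Rightarrow> 'v" where
  "chi e t z = (\<Sum>b\<in>Basis. phinv e t (z \<bullet> b) *\<^sub>R b)"

lemma psi_inner: "b \<in> Basis \<Longrightarrow> psi e t y \<bullet> b = phi e t (y \<bullet> b)"
  unfolding psi_def by (simp add: inner_sum_left inner_Basis if_distrib[of "\<lambda>x. _ * x"] sum.delta cong: if_cong)

lemma chi_inner: "b \<in> Basis \<Longrightarrow> chi e t y \<bullet> b = phinv e t (y \<bullet> b)"
  unfolding chi_def by (simp add: inner_sum_left inner_Basis if_distrib[of "\<lambda>x. _ * x"] sum.delta cong: if_cong)

lemma chi_psi:
  assumes "0 \<le> t" "t < 1" "0 \<le> e"
  shows "chi e t (psi e t y) = y"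
  by (rule euclidean_eqI) (simp add: chi_inner psi_inner phinv_phi[OF assms])

lemma psi_chi:
  assumes "0 \<le> t" "t < 1" "0 \<le> e"
  shows "psi e t (chi e t y) = y"
  by (rule euclidean_eqI) (simp add: chi_inner psi_inner phi_phinv[OF assms])

lemma psi_t0: "psi e 0 y = y"
  by (rule euclidean_eqI) (simp add: psi_inner phi_0)

lemma psi_zero:
  fixes y :: "'v::euclidean_space"
  assumes "0 \<le> t" "t < 1" "0 \<le> e" "psi e t y = 0"
  shows "y = 0"
proof (rule euclidean_eqI)
  fix b :: 'v assume b: "b \<in> Basis"
  have "phi e t (y \<bullet> b) = 0" using psi_inner[OF b, of e t y] assms(4) by simp
  then have "phi e t (y \<bullet> b) = phi e t 0" using phi_zero[OF assms(2)] by simp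
  then show "y \<bullet> b = 0 \<bullet> b" using phi_inj[OF assms(2)] by simp
qed

lemma pl_psi:
  "pl_map ({0..<1} \<times> (UNIV::'v::euclidean_space set)) (\<lambda>p. psi e (fst p) (snd p))"
proof -
  have "pl_map ({0..<1::real} \<times> (UNIV::'v set)) (\<lambda>p. \<Sum>b\<in>Basis. phi e (fst p) (snd p \<bullet> b) *\<^sub>R b)"
  proof (rule pl_map_sum[OF finite_Basis lp_strip])
    fix b :: 'v assume b: "b \<in> Basis"
    have "pl_map ({0..<1::real} \<times> (UNIV::'v set)) (\<lambda>p. (fst p, snd p \<bullet> b))"
      by (rule pl_map_linear[OF lp_strip]) (simp add: linear_iff inner_add_left)
    then have "pl_map ({0..<1::real} \<times> (UNIV::'v set)) (\<lambda>p. phi e (fst (fst p, snd p \<bullet> b)) (snd (fst p, snd p \<bullet> b)))"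
      by (rule pl_map_compose[OF _ pl_phi]) auto
    then have "pl_map ({0..<1::real} \<times> (UNIV::'v set)) (\<lambda>p. phi e (fst p) (snd p \<bullet> b))" by simp
    then show "pl_map ({0..<1::real} \<times> (UNIV::'v set)) (\<lambda>p. phi e (fst p) (snd p \<bullet> b) *\<^sub>R b)"
      by (rule pl_map_linear_compose) (simp add: linear_iff scaleR_add_left)
  qed
  then show ?thesis unfolding psi_def by simp
qed

lemma pl_chi:
  assumes "0 \<le> e"
  shows "pl_map ({0..<1} \<times> (UNIV::'v::euclidean_space set)) (\<lambda>p. chi e (fst p) (snd p))"
proof -
  have "pl_map ({0..<1::real} \<times> (UNIV::'v set)) (\<lambda>p. \<Sum>b\<in>Basis. phinv e (fst p) (snd p \<bullet> b) *\<^sub>R b)"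
  proof (rule pl_map_sum[OF finite_Basis lp_strip])
    fix b :: 'v assume b: "b \<in> Basis"
    have "pl_map ({0..<1::real} \<times> (UNIV::'v set)) (\<lambda>p. (fst p, snd p \<bullet> b))"
      by (rule pl_map_linear[OF lp_strip]) (simp add: linear_iff inner_add_left)
    then have "pl_map ({0..<1::real} \<times> (UNIV::'v set)) (\<lambda>p. phinv e (fst (fst p, snd p \<bullet> b)) (snd (fst p, snd p \<bullet> b)))"
      by (rule pl_map_compose[OF _ pl_phinv[OF assms]]) auto
    then have "pl_map ({0..<1::real} \<times> (UNIV::'v set)) (\<lambda>p. phinv e (fst p) (snd p \<bullet> b))" by simp
    then show "pl_map ({0..<1::real} \<times> (UNIV::'v set)) (\<lambda>p. phinv e (fst p) (snd p \<bullet> b) *\<^sub>R b)"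
      by (rule pl_map_linear_compose) (simp add: linear_iff scaleR_add_left)
  qed
  then show ?thesis unfolding chi_def by simp
qed

lemma psi_escape:
  assumes "t < 1" "1 - t \<le> (1/2)^k" "0 < e" "b \<in> Basis" "e \<le> \<bar>y \<bullet> b\<bar>"
  shows "real (k+1) * e \<le> norm (psi e t y)"
proof -
  have "real (k+1) * e \<le> \<bar>phi e t (y \<bullet> b)\<bar>" by (rule phi_abs_escape[OF assms(1-3,5)])
  also have "\<dots> = \<bar>psi e t y \<bullet> b\<bar>" using psi_inner[OF assms(4)] by simp
  also have "\<dots> \<le> norm (psi e t y)" using Basis_le_norm[OF assms(4)] by simp
  finally show ?thesis .
qed


lemma lp_preimage:
  fixes G :: "'a::euclidean_space \<Rightarrow> 'b::euclidean_space"
  assumes "pl_map D G" "locally_polyhedral A"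
  shows "locally_polyhedral {q\<in>D. G q \<in> A}"
proof -
  have eq: "{q\<in>D. G q \<in> A} = fst ` ((\<lambda>x. (x, G x)) ` D \<inter> (UNIV \<times> A))" by force
  have l: "locally_polyhedral ((\<lambda>x. (x, G x)) ` D \<inter> (UNIV \<times> A))"
    using assms lp_Int lp_Times[OF lp_UNIV] unfolding pl_map_def by blast
  have c: "continuous_on D G" using assms unfolding pl_map_def by blast
  have "locally_polyhedral (fst ` ((\<lambda>x. (x, G x)) ` D \<inter> (UNIV \<times> A)))"
  proof (rule lp_img[OF l linear_fst, of "\<lambda>q. (q, G q)"])
    have "fst ` ((\<lambda>x. (x, G x)) ` D \<inter> (UNIV \<times> A)) \<subseteq> D" by auto
    then show "continuous_on (fst ` ((\<lambda>x. (x, G x)) ` D \<inter> (UNIV \<times> A))) (\<lambda>q. (q, G q))"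
      using continuous_on_subset[OF c] by (intro continuous_intros) auto
  qed auto
  then show ?thesis using eq by simp
qed

lemma W_away:
  fixes W :: "('p::euclidean_space \<times> 'v::euclidean_space) set"
  assumes "compact P" "W \<subseteq> P \<times> UNIV" "closed W" "\<forall>x\<in>P. (x, 0) \<notin> W"
  shows "\<exists>e>0. \<forall>p\<in>W. \<exists>b\<in>Basis. e \<le> \<bar>snd p \<bullet> b\<bar>"
proof -
  have "\<exists>\<delta>>0. \<forall>p\<in>W. \<delta> \<le> norm (snd p)"
  proof -
    define K where "K = W \<inter> (P \<times> cball (0::'v) 1)"
    have cK: "compact K" unfolding K_def using assms(1,3) by (intro closed_Int_compact compact_Times compact_cball) auto
    show ?thesis
    proof (cases "K = {}")
      case True
      have "1 \<le> norm (snd p)" if p: "p \<in> W" for p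
      proof (rule ccontr)
        assume "\<not> 1 \<le> norm (snd p)"
        then have "p \<in> K" using p assms(2) unfolding K_def by (cases p) auto
        then show False using True by simp
      qed
      then show ?thesis by (intro exI[of _ 1]) auto
    next
      case False
      have "continuous_on K (\<lambda>p. norm (snd p))" by (intro continuous_intros)
      then obtain p0 where p0: "p0 \<in> K" "\<forall>p\<in>K. norm (snd p0) \<le> norm (snd p)"
        using continuous_attains_inf[OF cK False, of "\<lambda>p. norm (snd p)"] by blast
      have "p0 \<in> W" "fst p0 \<in> P" using p0(1) unfolding K_def by auto
      then have "snd p0 \<noteq> 0" using assms(4) by (metis prod.collapse)
      then have m: "0 < norm (snd p0)" by simp
      have "min (norm (snd p0)) 1 \<le> norm (snd p)" if p: "p \<in> W" for p
      proof (cases "norm (snd p) \<le> 1")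
        case True
        then have "p \<in> K" using p assms(2) unfolding K_def by (cases p) auto
        then show ?thesis using p0(2) by fastforce
      qed auto
      then show ?thesis using m by (intro exI[of _ "min (norm (snd p0)) 1"]) auto
    qed
  qed
  then obtain \<delta> where d: "\<delta> > 0" "\<forall>p\<in>W. \<delta> \<le> norm (snd p)" by blast
  define e where "e = \<delta> / real DIM('v)"
  have e: "e > 0" unfolding e_def using d(1) by simp
  have "\<exists>b\<in>Basis. e \<le> \<bar>snd p \<bullet> b\<bar>" if p: "p \<in> W" for p
  proof (rule ccontr)
    assume "\<not> (\<exists>b\<in>Basis. e \<le> \<bar>snd p \<bullet> b\<bar>)"
    then have lt: "\<And>b. b \<in> Basis \<Longrightarrow> \<bar>snd p \<bullet> b\<bar> < e" by auto
    have "norm (snd p) \<le> (\<Sum>b\<in>Basis. \<bar>snd p \<bullet> b\<bar>)" by (rule norm_le_l1)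
    also have "\<dots> < (\<Sum>b\<in>(Basis::'v set). e)" by (rule sum_strict_mono) (auto intro: lt)
    also have "\<dots> = \<delta>" unfolding e_def by simp
    finally show False using d(2) p by fastforce
  qed
  then show ?thesis using e by blast
qed

lemma Wh_closed:
  fixes W :: "('p::euclidean_space \<times> 'v::euclidean_space) set"
  assumes cW: "closed W" and e: "0 < e" and away: "\<forall>p\<in>W. \<exists>b\<in>Basis. e \<le> \<bar>snd p \<bullet> b\<bar>"
  shows "closed {q::(real \<times> 'p) \<times> 'v. 0 \<le> fst (fst q) \<and> fst (fst q) < 1 \<and> (snd (fst q), chi e (fst (fst q)) (snd q)) \<in> W}"
    (is "closed ?Wh")
  unfolding closed_sequential_limits
proof (intro allI impI, elim conjE)
  fix q l assume mem: "\<forall>n. q n \<in> ?Wh" and lim: "q \<longlonglongrightarrow> l"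
  have tl: "(\<lambda>n. fst (fst (q n))) \<longlonglongrightarrow> fst (fst l)" by (intro tendsto_intros lim)
  have xl: "(\<lambda>n. snd (fst (q n))) \<longlonglongrightarrow> snd (fst l)" by (intro tendsto_intros lim)
  have zl: "(\<lambda>n. snd (q n)) \<longlonglongrightarrow> snd l" by (intro tendsto_intros lim)
  have t0: "0 \<le> fst (fst l)" by (rule LIMSEQ_le_const[OF tl]) (use mem in auto)
  have t1: "fst (fst l) \<le> 1" by (rule LIMSEQ_le_const2[OF tl]) (use mem in \<open>auto intro: less_imp_le\<close>)
  show "l \<in> ?Wh"
  proof (cases "fst (fst l) < 1")
    case True
    have c: "continuous_on ({0..<1} \<times> UNIV) (\<lambda>p. chi e (fst p) (snd p::'v))"
      using pl_chi[of e] e unfolding pl_map_def by auto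
    have "(\<lambda>n. chi e (fst (fst (fst (q n)), snd (q n))) (snd (fst (fst (q n)), snd (q n)))) \<longlonglongrightarrow>
           chi e (fst (fst (fst l), snd l)) (snd (fst (fst l), snd l))"
      by (rule continuous_on_tendsto_compose[OF c tendsto_Pair[OF tl zl]]) (use True t0 mem in auto)
    then have "(\<lambda>n. (snd (fst (q n)), chi e (fst (fst (q n))) (snd (q n)))) \<longlonglongrightarrow> (snd (fst l), chi e (fst (fst l)) (snd l))"
      using xl by (intro tendsto_Pair) auto
    then have "(snd (fst l), chi e (fst (fst l)) (snd l)) \<in> W"
      by (rule closed_sequentially[OF cW, rotated]) (use mem in auto)
    then show ?thesis using True t0 by auto
  next
    case False
    then have t: "fst (fst l) = 1" using t1 by simp
    define R where "R = norm (snd l) + 1"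
    obtain k :: nat where k: "R / e < real k" using reals_Archimedean2 by blast
    then have kR: "R < real (k+1) * e" using e by (simp add: field_simps)
    have "\<forall>\<^sub>F n in sequentially. 1 - (1/2)^k < fst (fst (q n))"
      by (rule order_tendstoD(1)[OF tl]) (simp add: t)
    moreover have "\<forall>\<^sub>F n in sequentially. norm (snd (q n)) < R"
      by (rule order_tendstoD(2)[OF tendsto_norm[OF zl]]) (simp add: R_def)
    ultimately have "\<forall>\<^sub>F n in sequentially. 1 - (1/2)^k < fst (fst (q n)) \<and> norm (snd (q n)) < R"
      by (rule eventually_conj)
    then obtain n where n: "1 - (1/2)^k < fst (fst (q n))" "norm (snd (q n)) < R"
      unfolding eventually_sequentially by auto
    define t' where "t' = fst (fst (q n))"
    define y where "y = chi e t' (snd (q n))"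
    have qn: "0 \<le> t'" "t' < 1" "(snd (fst (q n)), y) \<in> W" using mem unfolding t'_def y_def by auto
    obtain b where b: "b \<in> Basis" "e \<le> \<bar>y \<bullet> b\<bar>" using away qn(3) by fastforce
    have "real (k+1) * e \<le> norm (psi e t' y)"
      by (rule psi_escape[OF qn(2) _ e b]) (use n(1) t'_def in simp)
    also have "psi e t' y = snd (q n)" unfolding y_def by (rule psi_chi[OF qn(1,2)]) (use e in simp)
    finally show ?thesis using n(2) kR by simp
  qed
qed


locale CC =
  fixes d :: nat and P :: "'p::euclidean_space set" and W :: "('p \<times> 'v::euclidean_space) set"
    and f :: "'p \<Rightarrow> 'v option" and e :: real
  assumes cP: "compact P" and lpP: "locally_polyhedral P"
    and WP: "W \<subseteq> P \<times> UNIV" and cW: "closed W" and lpW: "locally_polyhedral W"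
    and sub: "pl_submersion d TYPE('v) fst W P"
    and mk: "marking P W f"
    and zero: "\<forall>x\<in>P. (x, 0) \<notin> W"
    and e: "0 < e" and away: "\<forall>p\<in>W. \<exists>b\<in>Basis. e \<le> \<bar>snd p \<bullet> b\<bar>"
begin

definition Wh :: "((real \<times> 'p) \<times> 'v) set" where
  "Wh = {q. 0 \<le> fst (fst q) \<and> fst (fst q) < 1 \<and> (snd (fst q), chi e (fst (fst q)) (snd q)) \<in> W}"

lemma lpV:
  assumes "openin (top_of_set P) V"
  shows "locally_polyhedral V"
proof -
  obtain O' where "open O'" "V = P \<inter> O'" using assms unfolding openin_open by blast
  then show ?thesis using lp_Int[OF lpP lp_open] by blast
qed

lemma lpL:
  fixes L :: "'a::euclidean_space set"
  assumes "subspace L" shows "locally_polyhedral L"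
  by (rule lp_polyhedron[OF affine_imp_polyhedron[OF subspace_imp_affine[OF assms]]])

lemma chart:
  assumes q: "q \<in> Wh"
  shows "\<exists>V (L::'v set) (h::(real \<times> 'p) \<times> 'v \<Rightarrow> (real \<times> 'p) \<times> 'v) g.
        openin (top_of_set ({0..1} \<times> P)) V \<and> fst q \<in> V \<and>
        subspace L \<and> dim L = d \<and>
        pl_map (V \<times> L) h \<and>
        h ` (V \<times> L) \<subseteq> Wh \<inter> fst -` V \<and>
        openin (top_of_set (Wh \<inter> fst -` V)) (h ` (V \<times> L)) \<and>
        homeomorphism (V \<times> L) (h ` (V \<times> L)) h g \<and>
        h (fst q, 0) = q \<and>
        (\<forall>z\<in>V \<times> L. fst (h z) = fst z)"
proof -
  obtain t x z where qq: "q = ((t, x), z)" by (metis prod.collapse)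
  have t: "0 \<le> t" "t < 1" and W0: "(x, chi e t z) \<in> W" using q qq by (auto simp: Wh_def)
  define y0 where "y0 = chi e t z"
  have "\<forall>w\<in>W. \<exists>V (L::'v set) (h::'p \<times> 'v \<Rightarrow> 'p \<times> 'v) g.
        openin (top_of_set P) V \<and> fst w \<in> V \<and>
        subspace L \<and> dim L = d \<and>
        pl_map (V \<times> L) h \<and>
        h ` (V \<times> L) \<subseteq> W \<inter> fst -` V \<and>
        openin (top_of_set (W \<inter> fst -` V)) (h ` (V \<times> L)) \<and>
        homeomorphism (V \<times> L) (h ` (V \<times> L)) h g \<and>
        h (fst w, 0) = w \<and>
        (\<forall>z\<in>V \<times> L. fst (h z) = fst z)"
    using sub unfolding pl_submersion_def by (elim conjE) assumption
  then have ex: "\<exists>V (L::'v set) (h::'p \<times> 'v \<Rightarrow> 'p \<times> 'v) g.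
        openin (top_of_set P) V \<and> x \<in> V \<and>
        subspace L \<and> dim L = d \<and>
        pl_map (V \<times> L) h \<and>
        h ` (V \<times> L) \<subseteq> W \<inter> fst -` V \<and>
        openin (top_of_set (W \<inter> fst -` V)) (h ` (V \<times> L)) \<and>
        homeomorphism (V \<times> L) (h ` (V \<times> L)) h g \<and>
        h (x, 0) = (x, y0) \<and>
        (\<forall>z\<in>V \<times> L. fst (h z) = fst z)"
    using W0 unfolding y0_def by (drule_tac x="(x, chi e t z)" in bspec) simp_all
  obtain V and L :: "'v set" and h :: "'p \<times> 'v \<Rightarrow> 'p \<times> 'v" and g where ch:
        "openin (top_of_set P) V" "x \<in> V"
        "subspace L" "dim L = d"
        "pl_map (V \<times> L) h"
        "h ` (V \<times> L) \<subseteq> W \<inter> fst -` V"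
        "openin (top_of_set (W \<inter> fst -` V)) (h ` (V \<times> L))"
        "homeomorphism (V \<times> L) (h ` (V \<times> L)) h g"
        "h (x, 0) = (x, y0)"
        "\<forall>z\<in>V \<times> L. fst (h z) = fst z"
    using ex apply (elim exE conjE) apply (rule that) by assumption+
  define V' where "V' = {0..<1::real} \<times> V"
  define h' where "h' = (\<lambda>w::(real \<times> 'p) \<times> 'v. ((fst (fst w), fst (h (snd (fst w), snd w))), psi e (fst (fst w)) (snd (h (snd (fst w), snd w)))))"
  define G where "G = (\<lambda>u::(real \<times> 'p) \<times> 'v. (snd (fst u), chi e (fst (fst u)) (snd u)))"
  define g' where "g' = (\<lambda>u::(real \<times> 'p) \<times> 'v. ((fst (fst u), fst (g (G u))), snd (g (G u))))"
  have e0: "0 \<le> e" using e by simp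
  have hfst: "fst (h (snd (fst w), snd w)) = snd (fst w)" if "w \<in> V' \<times> L" for w
    using ch(10) that unfolding V'_def by auto
  have hW: "h (snd (fst w), snd w) \<in> W \<inter> fst -` V" if "w \<in> V' \<times> L" for w
  proof -
    have "(snd (fst w), snd w) \<in> V \<times> L" using that unfolding V'_def by auto
    then show ?thesis by (rule subsetD[OF ch(6) imageI])
  qed
  have h'w: "h' w = (fst w, psi e (fst (fst w)) (snd (h (snd (fst w), snd w))))" if "w \<in> V' \<times> L" for w
    using hfst[OF that] unfolding h'_def by (simp add: prod_eq_iff)
  have wt: "0 \<le> fst (fst w)" "fst (fst w) < 1" if "w \<in> V' \<times> L" for w
    using that unfolding V'_def by auto
  have Gh': "G (h' w) = h (snd (fst w), snd w)" if "w \<in> V' \<times> L" for w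
  proof -
    have "G (h' w) = (snd (fst w), snd (h (snd (fst w), snd w)))"
      using h'w[OF that] chi_psi[OF wt[OF that] e0] unfolding G_def by simp
    also have "\<dots> = h (snd (fst w), snd w)" using hfst[OF that] by (simp add: prod_eq_iff)
    finally show ?thesis .
  qed
  have h'Wh: "h' w \<in> Wh \<inter> fst -` V'" if "w \<in> V' \<times> L" for w
  proof -
    have "G (h' w) \<in> W" using Gh'[OF that] hW[OF that] by simp
    moreover have "fst (h' w) \<in> V'" using h'w[OF that] that by auto
    ultimately show ?thesis using wt[OF that] h'w[OF that] unfolding Wh_def G_def by auto
  qed
  have g'h': "g' (h' w) = w" if "w \<in> V' \<times> L" for w
  proof -
    have "(snd (fst w), snd w) \<in> V \<times> L" using that unfolding V'_def by auto
    then have gg: "g (G (h' w)) = (snd (fst w), snd w)" using Gh'[OF that] homeomorphism_apply1[OF ch(8)] by metis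
    have "g' (h' w) = ((fst (fst (h' w)), snd (fst w)), snd w)" unfolding g'_def gg by simp
    moreover have "fst (fst (h' w)) = fst (fst w)" using h'w[OF that] by simp
    ultimately show ?thesis by (simp add: prod_eq_iff)
  qed
  have oV': "openin (top_of_set ({0..1} \<times> P)) V'"
  proof -
    have "openin (top_of_set {0..1::real}) ({0..1} \<inter> {..<1})" by (rule openin_open_Int) simp
    moreover have "{0..1::real} \<inter> {..<1} = {0..<1}" by auto
    ultimately have "openin (top_of_set {0..1::real}) {0..<1}" by simp
    then show ?thesis unfolding V'_def by (rule openin_Times[OF _ ch(1)])
  qed
  have qV': "fst q \<in> V'" using qq t ch(2) unfolding V'_def by simp
  have lpD: "locally_polyhedral (V' \<times> L)"
    unfolding V'_def by (intro lp_Times lp_halfopen lpV[OF ch(1)] lpL[OF ch(3)])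
  have plh': "pl_map (V' \<times> L) h'"
  proof -
    have k1: "pl_map (V' \<times> L) (\<lambda>w. fst (fst w))" by (rule pl_map_linear[OF lpD]) (simp add: linear_iff)
    have k2': "pl_map (V' \<times> L) (\<lambda>w. (snd (fst w), snd w))" by (rule pl_map_linear[OF lpD]) (simp add: linear_iff)
    have "(\<lambda>w. (snd (fst w), snd w)) ` (V' \<times> L) \<subseteq> V \<times> L" unfolding V'_def by auto
    then have k2: "pl_map (V' \<times> L) (\<lambda>w. h (snd (fst w), snd w))" by (rule pl_map_compose[OF k2' ch(5)])
    have k: "pl_map (V' \<times> L) (\<lambda>w. (fst (fst w), h (snd (fst w), snd w)))" by (rule pl_map_pair[OF k1 k2])
    have s1: "pl_map ({0..<1::real} \<times> (UNIV::('p \<times> 'v) set)) (\<lambda>r. (fst r, fst (snd r)))"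
      by (rule pl_map_linear[OF lp_strip]) (simp add: linear_iff)
    have s2': "pl_map ({0..<1::real} \<times> (UNIV::('p \<times> 'v) set)) (\<lambda>r. (fst r, snd (snd r)))"
      by (rule pl_map_linear[OF lp_strip]) (simp add: linear_iff)
    have "(\<lambda>r. (fst r, snd (snd r))) ` ({0..<1::real} \<times> (UNIV::('p \<times> 'v) set)) \<subseteq> {0..<1} \<times> UNIV" by auto
    then have s2: "pl_map ({0..<1::real} \<times> (UNIV::('p \<times> 'v) set)) (\<lambda>r. psi e (fst (fst r, snd (snd r))) (snd (fst r, snd (snd r))))"
      by (rule pl_map_compose[OF s2' pl_psi])
    have s: "pl_map ({0..<1::real} \<times> (UNIV::('p \<times> 'v) set)) (\<lambda>r. ((fst r, fst (snd r)), psi e (fst r) (snd (snd r))))"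
      using pl_map_pair[OF s1 s2] by simp
    have "(\<lambda>w. (fst (fst w), h (snd (fst w), snd w))) ` (V' \<times> L) \<subseteq> {0..<1} \<times> UNIV" unfolding V'_def by auto
    from pl_map_compose[OF k s this] show ?thesis unfolding h'_def by simp
  qed
  have img: "h' ` (V' \<times> L) \<subseteq> Wh \<inter> fst -` V'" using h'Wh by auto
  obtain U where U: "open U" "h ` (V \<times> L) = (W \<inter> fst -` V) \<inter> U" using ch(7) unfolding openin_open by blast
  have cchi: "continuous_on ({0..<1} \<times> UNIV) (\<lambda>p. chi e (fst p) (snd p::'v))"
    using pl_chi[OF e0] unfolding pl_map_def by blast
  have cG: "continuous_on (Wh \<inter> fst -` V') G"
  proof -
    have "continuous_on (Wh \<inter> fst -` V') (\<lambda>u. chi e (fst (fst (fst u), snd u)) (snd (fst (fst u), snd u)))"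
      by (rule continuous_on_compose2[OF cchi]) (auto intro!: continuous_intros simp: Wh_def)
    then show ?thesis unfolding G_def by (auto intro!: continuous_intros)
  qed
  have imgeq: "h' ` (V' \<times> L) = (Wh \<inter> fst -` V') \<inter> G -` U"
  proof
    show "h' ` (V' \<times> L) \<subseteq> (Wh \<inter> fst -` V') \<inter> G -` U"
    proof
      fix u assume "u \<in> h' ` (V' \<times> L)"
      then obtain w where w: "w \<in> V' \<times> L" "u = h' w" by blast
      have "(snd (fst w), snd w) \<in> V \<times> L" using w(1) unfolding V'_def by auto
      then have "G u \<in> U" using Gh'[OF w(1)] U(2) w(2) by auto
      then show "u \<in> (Wh \<inter> fst -` V') \<inter> G -` U" using h'Wh[OF w(1)] w(2) by auto
    qed
    show "(Wh \<inter> fst -` V') \<inter> G -` U \<subseteq> h' ` (V' \<times> L)"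
    proof
      fix u assume u: "u \<in> (Wh \<inter> fst -` V') \<inter> G -` U"
      have uW: "G u \<in> W" and ut: "0 \<le> fst (fst u)" "fst (fst u) < 1" using u unfolding Wh_def G_def by auto
      have uV: "fst (G u) \<in> V" using u unfolding G_def V'_def by auto
      have "G u \<in> h ` (V \<times> L)" using U(2) uW uV u by auto
      then obtain w0 where w0: "w0 \<in> V \<times> L" "G u = h w0" by blast
      have fw0: "fst w0 = snd (fst u)" using ch(10) w0 unfolding G_def by (metis fst_conv)
      define w where "w = (fst u, snd w0)"
      have wD: "w \<in> V' \<times> L" using w0(1) u unfolding w_def V'_def by auto
      have "(snd (fst w), snd w) = w0" using fw0 unfolding w_def by (simp add: prod_eq_iff)
      then have "h (snd (fst w), snd w) = G u" using w0(2) by simp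
      then have "h' w = (fst u, psi e (fst (fst u)) (chi e (fst (fst u)) (snd u)))"
        using h'w[OF wD] unfolding w_def G_def by simp
      also have "\<dots> = u" using psi_chi[OF ut e0, of "snd u"] by (simp add: prod_eq_iff)
      finally show "u \<in> h' ` (V' \<times> L)" using wD by (metis image_eqI)
    qed
  qed
  have oimg: "openin (top_of_set (Wh \<inter> fst -` V')) (h' ` (V' \<times> L))"
    unfolding imgeq by (rule continuous_openin_preimage_gen[OF cG U(1)])
  have hom: "homeomorphism (V' \<times> L) (h' ` (V' \<times> L)) h' g'"
  proof (rule homeomorphismI)
    show "continuous_on (V' \<times> L) h'" using plh' unfolding pl_map_def by blast
    have cg: "continuous_on (h ` (V \<times> L)) g" using homeomorphism_cont2[OF ch(8)] .
    have Gimg: "G ` (h' ` (V' \<times> L)) \<subseteq> h ` (V \<times> L)"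
    proof
      fix v assume "v \<in> G ` (h' ` (V' \<times> L))"
      then obtain w where w: "w \<in> V' \<times> L" "v = G (h' w)" by blast
      have "(snd (fst w), snd w) \<in> V \<times> L" using w(1) unfolding V'_def by auto
      then show "v \<in> h ` (V \<times> L)" using Gh'[OF w(1)] w(2) by auto
    qed
    have "continuous_on (h' ` (V' \<times> L)) G" using continuous_on_subset[OF cG img] .
    then have "continuous_on (h' ` (V' \<times> L)) (\<lambda>u. g (G u))"
      using continuous_on_compose2[OF cg _ Gimg] by blast
    then show "continuous_on (h' ` (V' \<times> L)) g'" unfolding g'_def by (intro continuous_intros)
    show "h' ` (V' \<times> L) \<subseteq> h' ` (V' \<times> L)" by simp
    show "g' ` h' ` (V' \<times> L) \<subseteq> V' \<times> L" using g'h' by auto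
    show "\<And>w. w \<in> V' \<times> L \<Longrightarrow> g' (h' w) = w" by (rule g'h')
    show "\<And>u. u \<in> h' ` (V' \<times> L) \<Longrightarrow> h' (g' u) = u" using g'h' by auto
  qed
  have hq: "h' (fst q, 0) = q"
  proof -
    have "h' (fst q, 0) = ((t, x), psi e t y0)" using ch(9) qq unfolding h'_def by simp
    also have "\<dots> = q" using psi_chi[OF t e0] qq unfolding y0_def by simp
    finally show ?thesis .
  qed
  have hf: "\<forall>w\<in>V' \<times> L. fst (h' w) = fst w" using h'w by simp
  show ?thesis
    apply (rule exI[of _ V'], rule exI[of _ L], rule exI[of _ h'], rule exI[of _ g'])
    by (intro conjI oV' qV' ch(3) ch(4) plh' img oimg hom hq hf)
qed

end


context CC
begin

lemma e0: "0 \<le> e" using e by simp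

lemma Wh_sub: "Wh \<subseteq> ({0..1} \<times> P) \<times> UNIV"
proof
  fix q assume "q \<in> Wh"
  then have "0 \<le> fst (fst q)" "fst (fst q) < 1" "(snd (fst q), chi e (fst (fst q)) (snd q)) \<in> W"
    unfolding Wh_def by auto
  then show "q \<in> ({0..1} \<times> P) \<times> UNIV" using WP by (cases q) auto
qed

lemma closed_Wh: "closed Wh"
  unfolding Wh_def by (rule Wh_closed[OF cW e away])

lemma lp_Wh: "locally_polyhedral Wh"
proof -
  define G where "G = (\<lambda>q::(real \<times> 'p) \<times> 'v. (snd (fst q), chi e (fst (fst q)) (snd q)))"
  have lD: "locally_polyhedral (({0..<1::real} \<times> (UNIV::'p set)) \<times> (UNIV::'v set))"
    by (rule lp_Times[OF lp_strip lp_UNIV])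
  have G1: "pl_map (({0..<1::real} \<times> (UNIV::'p set)) \<times> (UNIV::'v set)) (\<lambda>q. snd (fst q))"
    by (rule pl_map_linear[OF lD]) (simp add: linear_iff)
  have G2': "pl_map (({0..<1::real} \<times> (UNIV::'p set)) \<times> (UNIV::'v set)) (\<lambda>q. (fst (fst q), snd q))"
    by (rule pl_map_linear[OF lD]) (simp add: linear_iff)
  have "(\<lambda>q. (fst (fst q), snd q)) ` (({0..<1::real} \<times> (UNIV::'p set)) \<times> (UNIV::'v set)) \<subseteq> {0..<1} \<times> UNIV" by auto
  then have G2: "pl_map (({0..<1::real} \<times> (UNIV::'p set)) \<times> (UNIV::'v set)) (\<lambda>q. chi e (fst (fst (fst q), snd q)) (snd (fst (fst q), snd q)))"
    by (rule pl_map_compose[OF G2' pl_chi[OF e0]])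
  have plG: "pl_map (({0..<1::real} \<times> (UNIV::'p set)) \<times> (UNIV::'v set)) G"
    using pl_map_pair[OF G1 G2] unfolding G_def by simp
  have "Wh = {q \<in> ({0..<1::real} \<times> (UNIV::'p set)) \<times> (UNIV::'v set). G q \<in> W}"
    unfolding Wh_def G_def by auto
  then show ?thesis using lp_preimage[OF plG lpW] by simp
qed

lemma Psi_Wh: "Psi d ({0..1} \<times> P) Wh"
  unfolding Psi_def
proof (intro conjI)
  show "Wh \<subseteq> ({0..1} \<times> P) \<times> UNIV" by (rule Wh_sub)
  show "closedin (top_of_set (({0..1} \<times> P) \<times> UNIV)) Wh" by (rule closed_subset[OF Wh_sub closed_Wh])
  show "locally_polyhedral Wh" by (rule lp_Wh)
  show "pl_submersion d TYPE('v) fst Wh ({0..1} \<times> P)"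
    unfolding pl_submersion_def
  proof (intro conjI ballI)
    show "pl_map Wh fst" by (rule pl_map_linear[OF lp_Wh linear_fst])
    show "locally_polyhedral ({0..1::real} \<times> P)" by (rule lp_Times[OF lp_unit_interval lpP])
    show "fst ` Wh \<subseteq> {0..1} \<times> P" using Wh_sub by auto
  next
    fix q assume "q \<in> Wh"
    then show "\<exists>V (L::'v set) (h::(real \<times> 'p) \<times> 'v \<Rightarrow> (real \<times> 'p) \<times> 'v) g.
        openin (top_of_set ({0..1} \<times> P)) V \<and> fst q \<in> V \<and>
        subspace L \<and> dim L = d \<and>
        pl_map (V \<times> L) h \<and>
        h ` (V \<times> L) \<subseteq> Wh \<inter> fst -` V \<and>
        openin (top_of_set (Wh \<inter> fst -` V)) (h ` (V \<times> L)) \<and>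
        homeomorphism (V \<times> L) (h ` (V \<times> L)) h g \<and>
        h (fst q, 0) = q \<and>
        (\<forall>z\<in>V \<times> L. fst (h z) = fst z)" by (rule chart)
  qed
qed

definition fh :: "real \<times> 'p \<Rightarrow> 'v option" where
  "fh q = (if fst q < 1 then map_option (psi e (fst q)) (f (snd q)) else None)"

lemma mk1: "oc_continuous_on P f" using mk unfolding marking_def by blast
lemma mk2: "x \<in> P \<Longrightarrow> f x = None \<longleftrightarrow> fibre W x = {}" using mk unfolding marking_def by blast
lemma mk3: "x \<in> P \<Longrightarrow> fibre W x \<noteq> {} \<Longrightarrow> \<exists>v. f x = Some v \<and> v \<in> fibre W x" using mk unfolding marking_def by blast
lemma mk5: "pl_map {x\<in>P. f x \<noteq> None} (\<lambda>x. the (f x))" using mk unfolding marking_def by blast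

lemma some_fibre: "x \<in> P \<Longrightarrow> f x = Some v \<Longrightarrow> (x, v) \<in> W"
  using mk2[of x] mk3[of x] unfolding fibre_def by auto

lemma fibre_Wh: "0 \<le> t \<Longrightarrow> t < 1 \<Longrightarrow> fibre Wh (t, x) = psi e t ` fibre W x"
proof -
  assume t: "0 \<le> t" "t < 1"
  show ?thesis
  proof (rule Set.set_eqI, rule iffI)
    fix z assume "z \<in> fibre Wh (t, x)"
    then have "chi e t z \<in> fibre W x" unfolding fibre_def Wh_def by auto
    moreover have "psi e t (chi e t z) = z" by (rule psi_chi[OF t e0])
    ultimately show "z \<in> psi e t ` fibre W x" by (metis image_eqI)
  next
    fix z assume "z \<in> psi e t ` fibre W x"
    then obtain y where y: "y \<in> fibre W x" "z = psi e t y" by auto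
    then show "z \<in> fibre Wh (t, x)" using chi_psi[OF t e0, of y] t unfolding fibre_def Wh_def by simp
  qed
qed

lemma fibre_Wh1: "\<not> t < 1 \<Longrightarrow> fibre Wh (t, x) = {}"
  unfolding fibre_def Wh_def by auto

end


context CC
begin

lemma openin_I01: "openin (top_of_set {0..1::real}) ({0..1} \<inter> S)" if "open S" for S
  using that by (rule openin_open_Int)

lemma oc_case1:
  assumes x: "x \<in> P" and U: "ocopen U" "None \<in> U"
  shows "\<exists>V. openin (top_of_set ({0..1} \<times> P)) V \<and> (1, x) \<in> V \<and> fh ` V \<subseteq> U"
proof -
  have cK: "compact (UNIV - Some -` U)" using U unfolding ocopen_def by blast
  then obtain R where R: "\<forall>k\<in>UNIV - Some -` U. norm k \<le> R" using compact_imp_bounded bounded_iff by metis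
  obtain k :: nat where k: "R / e < real k" using reals_Archimedean2 by blast
  then have kR: "R < real (k+1) * e" using e by (simp add: field_simps)
  define V where "V = ({0..1} \<inter> {1 - (1/2::real)^k <..}) \<times> P"
  have oV: "openin (top_of_set ({0..1} \<times> P)) V"
    unfolding V_def by (rule openin_Times[OF openin_I01 openin_subtopology_self]) simp
  have xV: "(1, x) \<in> V" unfolding V_def using x by simp
  have "fh q \<in> U" if q: "q \<in> V" for q
  proof (cases "fst q < 1 \<and> f (snd q) \<noteq> None")
    case False
    then have "fh q = None" unfolding fh_def by auto
    then show ?thesis using U by simp
  next
    case True
    then obtain w where w: "f (snd q) = Some w" and t: "fst q < 1" by auto
    have qP: "snd q \<in> P" using q unfolding V_def by auto
    have "(snd q, w) \<in> W" by (rule some_fibre[OF qP w])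
    then obtain b where b: "b \<in> Basis" "e \<le> \<bar>w \<bullet> b\<bar>" using away by fastforce
    have "1 - fst q \<le> (1/2)^k" using q unfolding V_def by auto
    then have "real (k+1) * e \<le> norm (psi e (fst q) w)" by (rule psi_escape[OF t _ e b])
    then have "psi e (fst q) w \<in> Some -` U" using R kR by force
    then show ?thesis unfolding fh_def using t w by simp
  qed
  then show ?thesis using oV xV by blast
qed

lemma oc_case2:
  assumes x: "x \<in> P" and t: "0 \<le> t" "t < 1" and fx: "f x = None" and U: "ocopen U" "None \<in> U"
  shows "\<exists>V. openin (top_of_set ({0..1} \<times> P)) V \<and> (t, x) \<in> V \<and> fh ` V \<subseteq> U"
proof -
  define K where "K = UNIV - Some -` U"
  have cK: "compact K" using U unfolding ocopen_def K_def by blast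
  define T where "T = (1 + t) / 2"
  have T: "t < T" "T < 1" using t unfolding T_def by auto
  define K2 where "K2 = (\<lambda>p. chi e (fst p) (snd p)) ` ({0..T} \<times> K)"
  have cchi: "continuous_on ({0..<1} \<times> UNIV) (\<lambda>p. chi e (fst p) (snd p::'v))"
    using pl_chi[OF e0] unfolding pl_map_def by blast
  have cK2: "compact K2" unfolding K2_def
    by (rule compact_continuous_image[OF continuous_on_subset[OF cchi] compact_Times[OF compact_Icc cK]]) (use T in auto)
  define U' where "U' = insert None (Some ` (- K2))"
  have pre: "Some -` U' = - K2" unfolding U'_def by auto
  have oU': "ocopen U'" unfolding ocopen_def pre using cK2 compact_imp_closed by (auto simp: open_Compl)
  have "f x \<in> U'" using fx unfolding U'_def by simp
  then obtain Vx where Vx: "openin (top_of_set P) Vx" "x \<in> Vx" "f ` Vx \<subseteq> U'"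
    using mk1 x oU' unfolding oc_continuous_on_def by metis
  define V where "V = ({0..1} \<inter> {..<T}) \<times> Vx"
  have oV: "openin (top_of_set ({0..1} \<times> P)) V"
    unfolding V_def by (rule openin_Times[OF openin_I01 Vx(1)]) simp
  have xV: "(t, x) \<in> V" unfolding V_def using t T Vx(2) by simp
  have "fh q \<in> U" if q: "q \<in> V" for q
  proof (cases "f (snd q)")
    case None
    then show ?thesis unfolding fh_def using U by simp
  next
    case (Some w)
    have tq: "0 \<le> fst q" "fst q < 1" "fst q \<le> T" using q T unfolding V_def by auto
    have "f (snd q) \<in> U'" using q Vx(3) unfolding V_def by auto
    then have wK2: "w \<notin> K2" using Some unfolding U'_def by auto
    have "psi e (fst q) w \<notin> K"
    proof
      assume "psi e (fst q) w \<in> K"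
      then have "(fst q, psi e (fst q) w) \<in> {0..T} \<times> K" using tq by auto
      then have "chi e (fst q) (psi e (fst q) w) \<in> K2" unfolding K2_def by (metis (no_types, lifting) fst_conv image_eqI snd_conv)
      then show False using wK2 chi_psi[OF tq(1,2) e0, of w] by simp
    qed
    then show ?thesis unfolding fh_def K_def using Some tq by simp
  qed
  then show ?thesis using oV xV by blast
qed

lemma dist_pair_le:
  fixes a1 a2 :: "'a::metric_space" and b1 b2 :: "'b::metric_space"
  shows "dist (a1, b1) (a2, b2) \<le> dist a1 a2 + dist b1 b2"
proof -
  have "dist (a1, b1) (a2, b2) = sqrt ((dist a1 a2)\<^sup>2 + (dist b1 b2)\<^sup>2)" by (rule dist_Pair_Pair)
  also have "\<dots> \<le> \<bar>dist a1 a2\<bar> + \<bar>dist b1 b2\<bar>" by (rule sqrt_sum_squares_le_sum_abs)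
  finally show ?thesis by simp
qed

lemma oc_case3:
  assumes x: "x \<in> P" and t: "0 \<le> t" "t < 1" and fx: "f x = Some v" and U: "ocopen U" "Some (psi e t v) \<in> U"
  shows "\<exists>V. openin (top_of_set ({0..1} \<times> P)) V \<and> (t, x) \<in> V \<and> fh ` V \<subseteq> U"
proof -
  have oO: "open (Some -` U)" using U unfolding ocopen_def by blast
  obtain r where r: "r > 0" "ball (psi e t v) r \<subseteq> Some -` U" using open_contains_ball oO U(2) by blast
  have cpsi: "continuous_on ({0..<1} \<times> UNIV) (\<lambda>p. psi e (fst p) (snd p::'v))"
    using pl_psi unfolding pl_map_def by blast
  have "(t, v) \<in> {0..<1} \<times> UNIV" using t by simp
  then obtain \<delta> where d: "\<delta> > 0" "\<forall>p\<in>{0..<1} \<times> UNIV. dist p (t, v) < \<delta> \<longrightarrow> dist (psi e (fst p) (snd p)) (psi e t v) < r"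
    using cpsi r(1) unfolding continuous_on_iff by fastforce
  define U' where "U' = Some ` ball v (\<delta>/2)"
  have pre: "Some -` U' = ball v (\<delta>/2)" unfolding U'_def by auto
  have oU': "ocopen U'" unfolding ocopen_def pre by (auto simp: U'_def)
  have "f x \<in> U'" using fx d(1) unfolding U'_def by simp
  then obtain Vx where Vx: "openin (top_of_set P) Vx" "x \<in> Vx" "f ` Vx \<subseteq> U'"
    using mk1 x oU' unfolding oc_continuous_on_def by metis
  define V where "V = ({0..1} \<inter> ({t - \<delta>/2 <..< t + \<delta>/2} \<inter> {..<1})) \<times> Vx"
  have oV: "openin (top_of_set ({0..1} \<times> P)) V"
    unfolding V_def by (rule openin_Times[OF openin_I01 Vx(1)]) auto
  have xV: "(t, x) \<in> V" unfolding V_def using t d(1) Vx(2) by simp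
  have "fh q \<in> U" if q: "q \<in> V" for q
  proof -
    have a: "t - \<delta>/2 < fst q" "fst q < t + \<delta>/2" using q unfolding V_def by auto
    have "\<bar>fst q - t\<bar> < \<delta>/2" using a by (intro abs_less_iff[THEN iffD2] conjI) linarith+
    then have tq: "0 \<le> fst q" "fst q < 1" "dist (fst q) t < \<delta>/2" using q unfolding V_def by (auto simp: dist_real_def)
    have "f (snd q) \<in> U'" using q Vx(3) unfolding V_def by auto
    then obtain w where w: "f (snd q) = Some w" "dist w v < \<delta>/2" unfolding U'_def by (auto simp: dist_commute)
    have "dist (fst q, w) (t, v) \<le> dist (fst q) t + dist w v" by (rule dist_pair_le)
    also have "\<dots> < \<delta>" using tq(3) w(2) by simp
    finally have "dist (psi e (fst q) w) (psi e t v) < r" using d(2) tq by fastforce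
    then have "psi e (fst q) w \<in> ball (psi e t v) r" by (simp add: dist_commute)
    then have "psi e (fst q) w \<in> Some -` U" using r(2) by (rule subsetD[rotated])
    then show ?thesis unfolding fh_def using w tq by simp
  qed
  then show ?thesis using oV xV by blast
qed

lemma oc_fh: "oc_continuous_on ({0..1} \<times> P) fh"
  unfolding oc_continuous_on_def
proof (intro ballI allI impI, elim conjE)
  fix p U assume p: "p \<in> {0..1} \<times> P" and U: "ocopen U" "fh p \<in> U"
  obtain t x where tx: "p = (t, x)" by (cases p)
  have x: "x \<in> P" and t: "0 \<le> t" "t \<le> 1" using p tx by auto
  show "\<exists>V. openin (top_of_set ({0..1} \<times> P)) V \<and> p \<in> V \<and> fh ` V \<subseteq> U"
  proof (cases "t < 1")
    case False
    then have "t = 1" using t by simp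
    moreover have "None \<in> U" using U(2) tx False unfolding fh_def by simp
    ultimately show ?thesis using oc_case1[OF x U(1)] tx by simp
  next
    case True
    show ?thesis
    proof (cases "f x")
      case None
      then have "None \<in> U" using U(2) tx True unfolding fh_def by simp
      then show ?thesis using oc_case2[OF x t(1) True None U(1)] tx by simp
    next
      case (Some v)
      then have "Some (psi e t v) \<in> U" using U(2) tx True unfolding fh_def by simp
      then show ?thesis using oc_case3[OF x t(1) True Some U(1)] tx by simp
    qed
  qed
qed

end


context CC
begin

lemma marking_Wh: "marking ({0..1} \<times> P) Wh fh"
  unfolding marking_def
proof (intro conjI ballI impI)
  show "oc_continuous_on ({0..1} \<times> P) fh" by (rule oc_fh)
next
  fix p assume p: "p \<in> {0..1::real} \<times> P"
  obtain t x where tx: "p = (t, x)" by (cases p)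
  have x: "x \<in> P" and t: "0 \<le> t" using p tx by auto
  show "fh p = None \<longleftrightarrow> fibre Wh p = {}"
  proof (cases "t < 1")
    case True
    then show ?thesis using fibre_Wh[OF t True, of x] mk2[OF x] tx unfolding fh_def by simp
  next
    case False
    then show ?thesis using fibre_Wh1[OF False, of x] tx unfolding fh_def by simp
  qed
next
  fix p assume p: "p \<in> {0..1::real} \<times> P" and ne: "fibre Wh p \<noteq> {}"
  obtain t x where tx: "p = (t, x)" by (cases p)
  have x: "x \<in> P" and t: "0 \<le> t" using p tx by auto
  have t1: "t < 1" using ne fibre_Wh1[of t x] tx by auto
  have "fibre W x \<noteq> {}" using ne fibre_Wh[OF t t1, of x] tx by auto
  then obtain v where v: "f x = Some v" "v \<in> fibre W x" using mk3[OF x] by blast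
  show "\<exists>v. fh p = Some v \<and> v \<in> fibre Wh p"
    using v t1 tx fibre_Wh[OF t t1, of x] unfolding fh_def by auto
next
  fix p assume p: "p \<in> {0..1::real} \<times> P" and z: "0 \<in> fibre Wh p"
  obtain t x where tx: "p = (t, x)" by (cases p)
  have x: "x \<in> P" and t: "0 \<le> t" using p tx by auto
  have t1: "t < 1" using z fibre_Wh1[of t x] tx by auto
  obtain y where y: "y \<in> fibre W x" "0 = psi e t y" using z fibre_Wh[OF t t1, of x] tx by auto
  have "y = 0" using psi_zero[OF t t1 e0 y(2)[symmetric]] .
  then have False using y(1) zero x unfolding fibre_def by auto
  then show "fh p = Some 0" ..
next
  define Q where "Q = {x\<in>P. f x \<noteq> None}"
  have plQ: "pl_map Q (\<lambda>x. the (f x))" using mk5 unfolding Q_def .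
  have lQ: "locally_polyhedral Q" using plQ unfolding pl_map_def by blast
  define D' where "D' = {0..<1::real} \<times> Q"
  have lD: "locally_polyhedral D'" unfolding D'_def by (rule lp_Times[OF lp_halfopen lQ])
  have a: "pl_map D' (\<lambda>p. fst p)" by (rule pl_map_linear[OF lD]) (simp add: linear_iff)
  have b': "pl_map D' (\<lambda>p. snd p)" by (rule pl_map_linear[OF lD]) (simp add: linear_iff)
  have "(\<lambda>p. snd p) ` D' \<subseteq> Q" unfolding D'_def by auto
  then have b: "pl_map D' (\<lambda>p. the (f (snd p)))" by (rule pl_map_compose[OF b' plQ])
  have A1: "pl_map D' (\<lambda>p. (fst p, the (f (snd p))))" by (rule pl_map_pair[OF a b])
  have "(\<lambda>p. (fst p, the (f (snd p)))) ` D' \<subseteq> {0..<1} \<times> UNIV" unfolding D'_def by auto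
  then have "pl_map D' (\<lambda>p. psi e (fst (fst p, the (f (snd p)))) (snd (fst p, the (f (snd p)))))"
    by (rule pl_map_compose[OF A1 pl_psi])
  then show "pl_map {x \<in> {0..1} \<times> P. fh x \<noteq> None} (\<lambda>x. the (fh x))"
  proof (rule pl_map_cong)
    show "D' = {x \<in> {0..1} \<times> P. fh x \<noteq> None}" unfolding D'_def Q_def fh_def by auto
    show "\<And>x. x \<in> D' \<Longrightarrow> psi e (fst (fst x, the (f (snd x)))) (snd (fst x, the (f (snd x)))) = the (fh x)"
      unfolding D'_def Q_def fh_def by auto
  qed
qed

lemma chi0: "chi e 0 y = y"
  using chi_psi[of 0 e y] e0 psi_t0[of e y] by simp

lemma slice0: "slice Wh 0 = W"
  unfolding slice_def Wh_def by (auto simp: chi0)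

lemma slice1: "slice Wh 1 = {}"
  unfolding slice_def Wh_def by auto

lemma fh0: "fh (0, x) = f x"
  unfolding fh_def by (cases "f x") (simp_all add: psi_t0)

lemma fh1: "fh (1, x) = None"
  unfolding fh_def by simp

end

theorem corollary3p14:
  fixes d :: nat
    and P :: "'p::euclidean_space set"
    and W :: "('p \<times> 'v::euclidean_space) set"
    and f :: "'p \<Rightarrow> 'v option"
  assumes "compact P" and "locally_polyhedral P"
    and "PsiT d P W f"
    and "zero_set P W = {}"
  shows "\<exists>Wh fh. concordance d P Wh fh W f {} (\<lambda>_. None) \<and>
           (\<forall>x\<in>P. fibre W x = {} \<longrightarrow> (\<forall>t\<in>{0..1}. fibre Wh (t, x) = {}))"
proof -
  have Ps: "Psi d P W" and mk: "marking P W f" using assms(3) unfolding PsiT_def by auto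
  have WP: "W \<subseteq> P \<times> UNIV" and ci: "closedin (top_of_set (P \<times> UNIV)) W"
    and lpW: "locally_polyhedral W" and sub: "pl_submersion d TYPE('v) fst W P"
    using Ps unfolding Psi_def by auto
  have cW: "closed W"
    by (rule closedin_closed_trans[OF ci]) (simp add: closed_Times compact_imp_closed assms(1))
  have zero: "\<forall>x\<in>P. (x, 0) \<notin> W" using assms(4) unfolding zero_set_def fibre_def by auto
  obtain e where e: "0 < e" "\<forall>p\<in>W. \<exists>b\<in>Basis. e \<le> \<bar>snd p \<bullet> b\<bar>"
    using W_away[OF assms(1) WP cW zero] by blast
  interpret C: CC d P W f e
    by (rule CC.intro) (use assms(1,2) WP cW lpW sub mk zero e in auto)
  show ?thesis
  proof (intro exI[of _ C.Wh] exI[of _ C.fh] conjI)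
    show "concordance d P C.Wh C.fh W f {} (\<lambda>_. None)"
      unfolding concordance_def PsiT_def
      using C.Psi_Wh C.marking_Wh C.slice0 C.slice1 C.fh0 C.fh1 by simp
    show "\<forall>x\<in>P. fibre W x = {} \<longrightarrow> (\<forall>t\<in>{0..1}. fibre C.Wh (t, x) = {})"
    proof (intro ballI impI)
      fix x t assume "fibre W x = {}" "t \<in> {0..1::real}"
      then show "fibre C.Wh (t, x) = {}"
        using C.fibre_Wh[of t x] C.fibre_Wh1[of t x] by (cases "t < 1") auto
    qed
  qed
qed


end
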